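(* Let $\rho_1,\sigma_1\in H^2(-1,0)$ and $\rho_2,\sigma_2\in H^2(0,1)$ be uniformly positive and $q_1\in L^1(-1,0)$, $q_2\in L^1(0,1)$ nonnegative. Let $\tilde u(x,\lambda)$ solve $-(\sigma_1u')'+q_1u=\lambda\rho_1u$ on $(-1,0)$ with $u(-1)=0$, $u'(-1)=1$, and $\tilde v(x,\lambda)$ solve $-(\sigma_2v')'+q_2v=\lambda\rho_2v$ on $(0,1)$ with $v(1)=0$, $v'(1)=-1$. Let $(\mu_n)_{n\ge1}$ be the nondecreasing arrangement $0<\mu_1\le\mu_2\le\cdots$ of the union of the Dirichlet eigenvalues $\mu^-_j$ of $-(\sigma_1y')'+q_1y=\lambda\rho_1y$ on $(-1,0)$, $y(-1)=y(0)=0$, and the Dirichlet eigenvalues $\mu^+_k$ of $-(\sigma_2y')'+q_2y=\lambda\rho_2y$ on $(0,1)$, $y(0)=y(1)=0$. Define the meromorphic function $$F(\lambda)=\frac{\sigma_1(0)\tilde v(0,\lambda)\tilde u_x(0^-,\lambda)-\sigma_2(0)\tilde u(0,\lambda)\tilde v_x(0^+,\lambda)}{\tilde u(0,\lambda)\tilde v(0,\lambda)},\qquad \lambda\in\mathbb C\setminus\{\mu_n\}.$$ Then $F$ is decreasing on $(-\infty,\mu_1)$ and on each interval $(\mu_n,\mu_{n+1})$, $n\ge1$, with $\mu_n\ne\mu_{n+1}$; furthermore, on each of these intervals it decreases from $+\infty$ to $-\infty$. *)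

theory Defs
  imports "HOL-Analysis.Analysis"
begin

text \<open>Sobolev space H^2(a,b) in one dimension: f is C^1 on [a,b] and its derivative
  is an indefinite integral of an L^2 function g (the second weak derivative).\<close>
definition H2_on :: "real \<Rightarrow> real \<Rightarrow> (real \<Rightarrow> real) \<Rightarrow> bool" where
  "H2_on a b f \<longleftrightarrow> (\<exists>f' g.
      (\<forall>x\<in>{a..b}. (f has_real_derivative f' x) (at x within {a..b})) \<and>
      (\<forall>x\<in>{a..b}. (g has_integral (f' x - f' a)) {a..x}) \<and>
      (\<lambda>x. (g x)\<^sup>2) integrable_on {a..b})"

definition uniformly_positive_on :: "real set \<Rightarrow> (real \<Rightarrow> real) \<Rightarrow> bool" where
  "uniformly_positive_on S f \<longleftrightarrow> (\<exists>c>0. \<forall>x\<in>S. c \<le> f x)"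

text \<open>y (with derivative y') is a solution on [a,b] of
  -(\<sigma> y')' + q y = lam \<rho> y in the Caratheodory sense:
  y is differentiable, and the quasi-derivative \<sigma> y' is absolutely continuous with
  (\<sigma> y')' = (q - lam \<rho>) y almost everywhere.\<close>
definition sl_solution ::
  "(real \<Rightarrow> real) \<Rightarrow> (real \<Rightarrow> real) \<Rightarrow> (real \<Rightarrow> real) \<Rightarrow> real \<Rightarrow> real \<Rightarrow> real
     \<Rightarrow> (real \<Rightarrow> real) \<Rightarrow> (real \<Rightarrow> real) \<Rightarrow> bool" where
  "sl_solution \<sigma> q \<rho> a b lam y y' \<longleftrightarrow>
     (\<forall>x\<in>{a..b}. (y has_real_derivative y' x) (at x within {a..b})) \<and>
     (\<forall>x\<in>{a..b}. ((\<lambda>t. (q t - lam * \<rho> t) * y t) has_integral (\<sigma> x * y' x - \<sigma> a * y' a)) {a..x})"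

definition dirichlet_eigenvalue ::
  "(real \<Rightarrow> real) \<Rightarrow> (real \<Rightarrow> real) \<Rightarrow> (real \<Rightarrow> real) \<Rightarrow> real \<Rightarrow> real \<Rightarrow> real \<Rightarrow> bool" where
  "dirichlet_eigenvalue \<sigma> q \<rho> a b lam \<longleftrightarrow>
     (\<exists>y y'. sl_solution \<sigma> q \<rho> a b lam y y' \<and> y a = 0 \<and> y b = 0 \<and> (\<exists>x\<in>{a..b}. y x \<noteq> 0))"

end

theory Submission
  imports Defs
begin

lemma local_to_global:
  fixes \<Psi> :: "real \<Rightarrow> real"
  assumes dpos: "\<delta> > 0"
    and loc: "\<And>c d. a \<le> c \<Longrightarrow> c \<le> d \<Longrightarrow> d \<le> b \<Longrightarrow> d - c < \<delta> \<Longrightarrow> \<Psi> d \<le> \<Psi> c"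
    and x: "x \<in> {a..b}"
  shows "\<Psi> x \<le> \<Psi> a"
proof -
  obtain n0 :: nat where n0: "real n0 > (x - a) / \<delta>"
    using reals_Archimedean2 by blast
  define n where "n = max 1 n0"
  have n: "real n > (x - a) / \<delta>" "n \<ge> 1" using n0 by (auto simp: n_def)
  define h where "h = (x - a) / n"
  have hnn: "h \<ge> 0" using x n by (auto simp: h_def)
  have hlt: "h < \<delta>" using n dpos unfolding h_def
    by (simp add: divide_less_eq mult.commute pos_divide_less_eq)
  have nh: "a + n * h = x" using n by (simp add: h_def)
  have "\<forall>k. k \<le> n \<longrightarrow> \<Psi> (a + k * h) \<le> \<Psi> a"
  proof (intro allI)
    fix k show "k \<le> n \<longrightarrow> \<Psi> (a + k * h) \<le> \<Psi> a"
    proof (induction k)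
      case 0 then show ?case by simp
    next
      case (Suc k)
      show ?case
      proof
        assume kn: "Suc k \<le> n"
        have le: "a + real (Suc k) * h \<le> x"
          using nh hnn kn by (metis add_le_cancel_left mult_right_mono of_nat_le_iff)
        have "\<Psi> (a + real (Suc k) * h) \<le> \<Psi> (a + real k * h)"
          apply (rule loc) using hnn le x hlt by (auto simp: algebra_simps)
        moreover have "\<Psi> (a + real k * h) \<le> \<Psi> a" using Suc kn by simp
        ultimately show "\<Psi> (a + real (Suc k) * h) \<le> \<Psi> a" by linarith
      qed
    qed
  qed
  then show ?thesis using nh by (metis order_refl)
qed

lemma exp_bound_aux:
  fixes \<kappa> :: real
  assumes "0 \<le> \<kappa>" "\<kappa> \<le> 1/2"
  shows "1 \<le> (1 - \<kappa>) * exp (2 * \<kappa>)"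
proof -
  have "1 + 2*\<kappa> \<le> exp (2*\<kappa>)" by (rule exp_ge_add_one_self)
  hence "(1-\<kappa>) * (1 + 2*\<kappa>) \<le> (1 - \<kappa>) * exp (2 * \<kappa>)"
    using assms by (intro mult_left_mono) auto
  moreover have "1 \<le> (1-\<kappa>) * (1 + 2*\<kappa>)" 
  proof -
    have "0 \<le> \<kappa> * (1 - 2*\<kappa>)" using assms by auto
    thus ?thesis by (simp add: algebra_simps)
  qed
  ultimately show ?thesis by linarith
qed


lemma abs_int_cont_prod:
  fixes E k :: "real \<Rightarrow> real"
  assumes "continuous_on {a..b} E" "k absolutely_integrable_on {a..b}"
  shows "(\<lambda>t. k t * E t) absolutely_integrable_on {a..b}"
proof -
  have "(\<lambda>t. E t * k t) absolutely_integrable_on {a..b}"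
  proof (rule absolutely_integrable_bounded_measurable_product_real)
    show "E \<in> borel_measurable (lebesgue_on {a..b})"
      using assms(1) by (intro continuous_imp_measurable_on_sets_lebesgue) auto
    show "bounded (E ` {a..b})"
      using assms(1) by (intro compact_imp_bounded compact_continuous_image) auto
  qed (use assms in auto)
  then show ?thesis by (simp add: mult.commute)
qed

lemma gronwall:
  fixes E k :: "real \<Rightarrow> real"
  assumes ab: "a \<le> b" and Ec: "continuous_on {a..b} E" and Enn: "\<And>x. x\<in>{a..b} \<Longrightarrow> 0 \<le> E x"
    and ki: "k absolutely_integrable_on {a..b}" and knn: "\<And>x. x\<in>{a..b} \<Longrightarrow> 0 \<le> k x"
    and hyp: "\<And>x. x\<in>{a..b} \<Longrightarrow> E x \<le> C + integral {a..x} (\<lambda>t. k t * E t)"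
    and x: "x \<in> {a..b}"
  shows "E x \<le> C * exp (2 * integral {a..b} k)"
proof -
  have kEa: "(\<lambda>t. k t * E t) absolutely_integrable_on {a..b}"
    using abs_int_cont_prod[OF Ec ki] .
  hence kEi: "(\<lambda>t. k t * E t) integrable_on {a..b}" by (rule set_lebesgue_integral_eq_integral(1))
  have kint: "k integrable_on {a..b}" using ki by (rule set_lebesgue_integral_eq_integral(1))
  define R where "R y = integral {a..y} (\<lambda>t. k t * E t)" for y
  define K where "K y = integral {a..y} k" for y
  have Rsplit: "R d = R c + integral {c..d} (\<lambda>t. k t * E t)" if "a \<le> c" "c \<le> d" "d \<le> b" for c d
  proof -
    have "(\<lambda>t. k t * E t) integrable_on {a..d}" by (rule integrable_subinterval_real[OF kEi]) (use that in auto)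
    from Henstock_Kurzweil_Integration.integral_combine[OF that(1,2) this] show ?thesis unfolding R_def by simp
  qed
  have Ksplit: "K d = K c + integral {c..d} k" if "a \<le> c" "c \<le> d" "d \<le> b" for c d
  proof -
    have "k integrable_on {a..d}" by (rule integrable_subinterval_real[OF kint]) (use that in auto)
    from Henstock_Kurzweil_Integration.integral_combine[OF that(1,2) this] show ?thesis unfolding K_def by simp
  qed
  have kEnn: "0 \<le> integral {c..d} (\<lambda>t. k t * E t)" if "a \<le> c" "c \<le> d" "d \<le> b" for c d
    apply (rule integral_nonneg)
    apply (rule integrable_subinterval_real[OF kEi]) using that apply auto[1]
    using Enn knn that by (auto intro: mult_nonneg_nonneg)
  have knn2: "0 \<le> integral {c..d} k" if "a \<le> c" "c \<le> d" "d \<le> b" for c d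
    apply (rule integral_nonneg)
    apply (rule integrable_subinterval_real[OF kint]) using that apply auto[1]
    using knn that by auto
  have Kc: "continuous_on {a..b} K" unfolding K_def using indefinite_integral_continuous_1[OF kint] .
  hence "uniformly_continuous_on {a..b} K" by (intro compact_uniformly_continuous) auto
  then obtain \<delta> where dpos: "\<delta> > 0" and dK: "\<And>y y'. y \<in> {a..b} \<Longrightarrow> y' \<in> {a..b} \<Longrightarrow> dist y' y < \<delta> \<Longrightarrow> dist (K y') (K y) < 1/2"
    unfolding uniformly_continuous_on_def by (erule_tac x="1/2" in allE) auto
  have C0: "0 \<le> C" using hyp[of a] Enn[of a] ab by simp
  define \<Psi> where "\<Psi> y = (C + R y) * exp (- 2 * K y)" for y
  have loc: "\<Psi> d \<le> \<Psi> c" if cd: "a \<le> c" "c \<le> d" "d \<le> b" "d - c < \<delta>" for c d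
  proof -
    define \<kappa> where "\<kappa> = integral {c..d} k"
    have k0: "0 \<le> \<kappa>" using knn2 cd by (simp add: \<kappa>_def)
    have "dist (K d) (K c) < 1/2" using dK[of c d] cd by (auto simp: dist_real_def)
    hence k1: "\<kappa> \<le> 1/2" using Ksplit[OF cd(1-3)] by (simp add: \<kappa>_def dist_real_def)
    have Kd: "K d = K c + \<kappa>" using Ksplit[OF cd(1-3)] by (simp add: \<kappa>_def)
    have Rmono: "R t \<le> R d" if "t \<in> {c..d}" for t
      using Rsplit[of t d] kEnn[of t d] that cd by auto
    have "integral {c..d} (\<lambda>t. k t * E t) \<le> integral {c..d} (\<lambda>t. k t * (C + R d))"
    proof (rule integral_le)
      show "(\<lambda>t. k t * E t) integrable_on {c..d}" by (rule integrable_subinterval_real[OF kEi]) (use cd in auto)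
      show "(\<lambda>t. k t * (C + R d)) integrable_on {c..d}"
        by (intro integrable_on_mult_left integrable_subinterval_real[OF kint]) (use cd in auto)
      fix t assume t: "t \<in> {c..d}"
      have "E t \<le> C + R t" using hyp[of t] t cd by (auto simp: R_def)
      also have "\<dots> \<le> C + R d" using Rmono[OF t] by simp
      finally show "k t * E t \<le> k t * (C + R d)" using knn[of t] t cd by (intro mult_left_mono) auto
    qed
    also have "\<dots> = \<kappa> * (C + R d)" by (simp add: \<kappa>_def)
    finally have step: "R d - R c \<le> \<kappa> * (C + R d)" using Rsplit[OF cd(1-3)] by simp
    define X where "X = C + R d"
    define Y where "Y = C + R c"
    have X0: "0 \<le> X" unfolding X_def using C0 kEnn[of a d] cd by (simp add: R_def)
    have XY: "X * (1 - \<kappa>) \<le> Y" using step by (simp add: X_def Y_def algebra_simps)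
    have "X \<le> X * ((1 - \<kappa>) * exp (2 * \<kappa>))"
      using mult_left_mono[OF exp_bound_aux[OF k0 k1] X0] by simp
    also have "\<dots> = (X * (1 - \<kappa>)) * exp (2 * \<kappa>)" by simp
    also have "\<dots> \<le> Y * exp (2 * \<kappa>)" using XY by (intro mult_right_mono) auto
    finally have XYe: "X \<le> Y * exp (2 * \<kappa>)" .
    have "\<Psi> d = X * exp (-2 * K d)" by (simp add: \<Psi>_def X_def)
    also have "\<dots> \<le> Y * exp (2 * \<kappa>) * exp (-2 * K d)" using XYe by (intro mult_right_mono) auto
    also have "\<dots> = Y * exp (-2 * K c)" 
    proof -
      have "exp (2 * \<kappa>) * exp (-2 * K d) = exp (-2 * K c)" unfolding mult_exp_exp using Kd by (simp add: algebra_simps)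
      thus ?thesis by simp
    qed
    also have "\<dots> = \<Psi> c" by (simp add: \<Psi>_def Y_def)
    finally show ?thesis .
  qed
  have "\<Psi> x \<le> \<Psi> a" by (rule local_to_global[OF dpos loc x])
  hence Px: "\<Psi> x \<le> C" by (simp add: \<Psi>_def R_def K_def)
  have "C + R x = \<Psi> x * exp (2 * K x)" by (simp add: \<Psi>_def mult_exp_exp)
  also have "\<dots> \<le> C * exp (2 * K x)" using Px by (intro mult_right_mono) auto
  also have "\<dots> \<le> C * exp (2 * K b)"
    using C0 Ksplit[of x b] knn2[of x b] x by (intro mult_left_mono) auto
  finally show ?thesis using hyp[OF x] by (simp add: R_def K_def)
qed


lemma int_split:
  fixes f :: "real \<Rightarrow> real"
  assumes "f integrable_on {a..b}" "a \<le> c" "c \<le> d" "d \<le> b"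
  shows "integral {a..d} f = integral {a..c} f + integral {c..d} f"
proof -
  have "f integrable_on {a..d}" by (rule integrable_subinterval_real[OF assms(1)]) (use assms in auto)
  from Henstock_Kurzweil_Integration.integral_combine[OF assms(2,3) this] show ?thesis by simp
qed

lemma int_sub:
  fixes f :: "real \<Rightarrow> real"
  assumes "f integrable_on {a..b}" "a \<le> c" "d \<le> b"
  shows "f integrable_on {c..d}"
  by (rule integrable_subinterval_real[OF assms(1)]) (use assms in auto)

lemma deriv_cont_on:
  assumes "\<And>x. x \<in> {a..b} \<Longrightarrow> (f has_real_derivative f' x) (at x within {a..b})"
  shows "continuous_on {a..b} f"
  using assms DERIV_continuous continuous_on_eq_continuous_within by blast

lemma ibp:
  fixes f f' g W :: "real \<Rightarrow> real"
  assumes ab: "a \<le> b"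
   and fd: "\<And>x. x \<in> {a..b} \<Longrightarrow> (f has_real_derivative f' x) (at x within {a..b})"
   and f'c: "continuous_on {a..b} f'"
   and gi: "g absolutely_integrable_on {a..b}"
   and Wg: "\<And>x. x \<in> {a..b} \<Longrightarrow> (g has_integral (W x - W a)) {a..x}"
   and x: "x \<in> {a..b}"
  shows "((\<lambda>t. f t * g t + f' t * W t) has_integral (f x * W x - f a * W a)) {a..x}"
proof -
  have fc: "continuous_on {a..b} f" using deriv_cont_on fd by blast
  have gint: "g integrable_on {a..b}" using gi by (rule set_lebesgue_integral_eq_integral(1))
  have agint: "(\<lambda>t. \<bar>g t\<bar>) integrable_on {a..b}" using gi by (simp add: absolutely_integrable_on_def)
  have Weq: "W y = W a + integral {a..y} g" if "y \<in> {a..b}" for y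
    using Wg[OF that] by (simp add: integral_unique)
  have Wc: "continuous_on {a..b} W"
  proof -
    have "continuous_on {a..b} (\<lambda>y. W a + integral {a..y} g)"
      by (rule continuous_on_add[OF continuous_on_const indefinite_integral_continuous_1[OF gint]])
    then show ?thesis by (rule continuous_on_eq) (rule Weq[symmetric])
  qed
  have fgi: "(\<lambda>t. g t * f t) integrable_on {a..b}"
    using abs_int_cont_prod[OF fc gi] by (rule set_lebesgue_integral_eq_integral(1))
  have fWi: "(\<lambda>t. f' t * W t) integrable_on {a..b}"
    by (intro integrable_continuous_real continuous_intros f'c Wc)
  define h where "h t = f t * g t + f' t * W t" for t
  have hi: "h integrable_on {a..b}" unfolding h_def using integrable_add[OF fgi fWi] by (simp add: mult.commute)
  define D where "D y = f y * W y - f a * W a - integral {a..y} h" for y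
  obtain B where B0: "\<forall>y\<in>f' ` {a..b}. norm y \<le> B"
    using compact_imp_bounded[OF compact_continuous_image[OF f'c compact_Icc]]
    unfolding bounded_iff by blast
  have B: "\<bar>f' t\<bar> \<le> B" if "t \<in> {a..b}" for t using B0 that by auto
  define G where "G y = integral {a..y} (\<lambda>t. \<bar>g t\<bar>)" for y
  have main: "\<bar>D x\<bar> \<le> \<epsilon> * (G x + (\<bar>B\<bar> + 1) * x - (\<bar>B\<bar> + 1) * a)" if epos: "\<epsilon> > 0" for \<epsilon>
  proof -
    have "uniformly_continuous_on {a..b} f" using fc by (intro compact_uniformly_continuous) auto
    then obtain \<delta>1 where d1: "\<delta>1 > 0" "\<And>y y'. y \<in> {a..b} \<Longrightarrow> y' \<in> {a..b} \<Longrightarrow> dist y' y < \<delta>1 \<Longrightarrow> dist (f y') (f y) < \<epsilon>"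
      unfolding uniformly_continuous_on_def by (erule_tac x=\<epsilon> in allE) (use epos in auto)
    have "uniformly_continuous_on {a..b} W" using Wc by (intro compact_uniformly_continuous) auto
    then obtain \<delta>2 where d2: "\<delta>2 > 0" "\<And>y y'. y \<in> {a..b} \<Longrightarrow> y' \<in> {a..b} \<Longrightarrow> dist y' y < \<delta>2 \<Longrightarrow> dist (W y') (W y) < \<epsilon>"
      unfolding uniformly_continuous_on_def by (erule_tac x=\<epsilon> in allE) (use epos in auto)
    define \<delta> where "\<delta> = min \<delta>1 \<delta>2"
    have dpos: "\<delta> > 0" using d1 d2 by (simp add: \<delta>_def)
    define \<Psi> where "\<Psi> y = \<bar>D y\<bar> - \<epsilon> * (G y + (\<bar>B\<bar> + 1) * y)" for y
    have loc: "\<Psi> d \<le> \<Psi> c" if cd: "a \<le> c" "c \<le> d" "d \<le> b" "d - c < \<delta>" for c d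
    proof -
      have gcd: "g integrable_on {c..d}" using int_sub[OF gint cd(1,3)] .
      have fgcd: "(\<lambda>t. g t * f t) integrable_on {c..d}" using int_sub[OF fgi cd(1,3)] .
      have fWcd: "(\<lambda>t. f' t * W t) integrable_on {c..d}" using int_sub[OF fWi cd(1,3)] .
      have agcd: "(\<lambda>t. \<bar>g t\<bar>) integrable_on {c..d}" using int_sub[OF agint cd(1,3)] .
      have f'cd: "f' integrable_on {c..d}"
        using int_sub[OF integrable_continuous_real[OF f'c] cd(1,3)] .
      have Wdc: "W d - W c = integral {c..d} g"
        using Weq[of d] Weq[of c] int_split[OF gint cd(1-3)] cd by simp
      have fdc: "f d - f c = integral {c..d} f'"
      proof -
        have "(f' has_integral (f d - f c)) {c..d}"
        proof (rule fundamental_theorem_of_calculus[OF cd(2)])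
          fix t assume t: "t \<in> {c..d}"
          have "(f has_real_derivative f' t) (at t within {c..d})"
            using DERIV_subset[OF fd[of t]] t cd by auto
          then show "(f has_vector_derivative f' t) (at t within {c..d})"
            by (simp add: has_real_derivative_iff_has_vector_derivative)
        qed
        then show ?thesis by (simp add: integral_unique)
      qed
      have hcd: "integral {c..d} h = integral {c..d} (\<lambda>t. g t * f t) + integral {c..d} (\<lambda>t. f' t * W t)"
        unfolding h_def using integral_add[OF fgcd fWcd] by (simp add: mult.commute)
      have Ddc: "D d - D c = (f d * W d - f c * W c) - integral {c..d} h"
        unfolding D_def using int_split[OF hi cd(1-3)] by simp
      have "f d * W d - f c * W c = f c * (W d - W c) + (f d - f c) * W d" by (simp add: algebra_simps)
      also have "\<dots> = integral {c..d} (\<lambda>t. f c * g t) + integral {c..d} (\<lambda>t. f' t * W d)"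
        using Wdc fdc by simp
      finally have "D d - D c = integral {c..d} (\<lambda>t. f c * g t) - integral {c..d} (\<lambda>t. g t * f t)
          + (integral {c..d} (\<lambda>t. f' t * W d) - integral {c..d} (\<lambda>t. f' t * W t))"
        using Ddc hcd by simp
      also have "\<dots> = integral {c..d} (\<lambda>t. g t * (f c - f t)) + integral {c..d} (\<lambda>t. f' t * (W d - W t))"
      proof -
        have i1: "(\<lambda>t. f c * g t) integrable_on {c..d}" using integrable_on_cmult_left[OF gcd] by simp
        have i2: "(\<lambda>t. f' t * W d) integrable_on {c..d}" using integrable_on_mult_left[OF f'cd] by simp
        show ?thesis
          using integral_diff[OF i1 fgcd] integral_diff[OF i2 fWcd] by (simp add: algebra_simps)
      qed
      finally have Deq: "D d - D c = integral {c..d} (\<lambda>t. g t * (f c - f t)) + integral {c..d} (\<lambda>t. f' t * (W d - W t))" .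
      have b1: "\<bar>integral {c..d} (\<lambda>t. g t * (f c - f t))\<bar> \<le> integral {c..d} (\<lambda>t. \<epsilon> * \<bar>g t\<bar>)"
      proof -
        have "norm (integral {c..d} (\<lambda>t. g t * (f c - f t))) \<le> integral {c..d} (\<lambda>t. \<epsilon> * \<bar>g t\<bar>)"
        proof (rule integral_norm_bound_integral)
          show "(\<lambda>t. g t * (f c - f t)) integrable_on {c..d}"
            using integrable_diff[OF integrable_on_cmult_left[OF gcd, of "f c"] fgcd] by (simp add: algebra_simps)
          show "(\<lambda>t. \<epsilon> * \<bar>g t\<bar>) integrable_on {c..d}" using integrable_on_cmult_left[OF agcd] by simp
          fix t assume t: "t \<in> {c..d}"
          have "dist (f t) (f c) < \<epsilon>" using d1(2)[of c t] t cd by (auto simp: \<delta>_def dist_real_def)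
          hence "\<bar>f c - f t\<bar> \<le> \<epsilon>" by (simp add: dist_real_def)
          hence "\<bar>g t\<bar> * \<bar>f c - f t\<bar> \<le> \<bar>g t\<bar> * \<epsilon>" by (rule mult_left_mono) auto
          then show "norm (g t * (f c - f t)) \<le> \<epsilon> * \<bar>g t\<bar>"
            by (simp add: abs_mult mult.commute)
        qed
        then show ?thesis by simp
      qed
      have b2: "\<bar>integral {c..d} (\<lambda>t. f' t * (W d - W t))\<bar> \<le> integral {c..d} (\<lambda>t. (\<bar>B\<bar> + 1) * \<epsilon>)"
      proof -
        have "norm (integral {c..d} (\<lambda>t. f' t * (W d - W t))) \<le> integral {c..d} (\<lambda>t. (\<bar>B\<bar> + 1) * \<epsilon>)"
        proof (rule integral_norm_bound_integral)
          show "(\<lambda>t. f' t * (W d - W t)) integrable_on {c..d}"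
            using integrable_diff[OF integrable_on_mult_left[OF f'cd, of "W d"] fWcd] by (simp add: algebra_simps)
          show "(\<lambda>t. (\<bar>B\<bar> + 1) * \<epsilon>) integrable_on {c..d}" by (rule integrable_continuous_real) (rule continuous_on_const)
          fix t assume t: "t \<in> {c..d}"
          have "dist (W t) (W d) < \<epsilon>" using d2(2)[of d t] t cd by (auto simp: \<delta>_def dist_real_def)
          hence w: "\<bar>W d - W t\<bar> \<le> \<epsilon>" by (simp add: dist_real_def)
          have "\<bar>f' t\<bar> \<le> \<bar>B\<bar> + 1" using B[of t] t cd by auto
          then have "\<bar>f' t\<bar> * \<bar>W d - W t\<bar> \<le> (\<bar>B\<bar> + 1) * \<epsilon>" using w by (intro mult_mono) auto
          then show "norm (f' t * (W d - W t)) \<le> (\<bar>B\<bar> + 1) * \<epsilon>" by (simp add: abs_mult)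
        qed
        then show ?thesis by simp
      qed
      have "integral {c..d} (\<lambda>t. \<epsilon> * \<bar>g t\<bar>) = \<epsilon> * (G d - G c)"
        unfolding G_def using int_split[OF agint cd(1-3)] by simp
      moreover have "integral {c..d} (\<lambda>t. (\<bar>B\<bar> + 1) * \<epsilon>) = (\<bar>B\<bar> + 1) * \<epsilon> * (d - c)"
        using cd by simp
      ultimately have "\<bar>D d - D c\<bar> \<le> \<epsilon> * (G d - G c) + (\<bar>B\<bar> + 1) * \<epsilon> * (d - c)"
        using b1 b2 Deq by linarith
      then show ?thesis unfolding \<Psi>_def by (simp add: algebra_simps)
    qed
    have "\<Psi> x \<le> \<Psi> a" by (rule local_to_global[OF dpos loc x])
    then show ?thesis by (simp add: \<Psi>_def D_def G_def algebra_simps)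
  qed
  have "D x = 0"
  proof (rule ccontr)
    assume ne: "D x \<noteq> 0"
    define M where "M = \<bar>G x + (\<bar>B\<bar> + 1) * x - (\<bar>B\<bar> + 1) * a\<bar> + 1"
    have Mpos: "M > 0" by (simp add: M_def add_pos_nonneg)
    define \<epsilon> where "\<epsilon> = \<bar>D x\<bar> / (2 * M)"
    have epos: "\<epsilon> > 0" using ne Mpos by (simp add: \<epsilon>_def)
    have "\<bar>D x\<bar> \<le> \<epsilon> * M"

    proof -
      have "G x + (\<bar>B\<bar> + 1) * x - (\<bar>B\<bar> + 1) * a \<le> M" by (simp add: M_def)
      from mult_left_mono[OF this less_imp_le[OF epos]] main[OF epos] show ?thesis by linarith
    qed
    also have "\<dots> = \<bar>D x\<bar> / 2" using Mpos by (simp add: \<epsilon>_def)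
    finally show False using ne by simp
  qed
  moreover have "(h has_integral integral {a..x} h) {a..x}"
    using int_sub[OF hi, of a x] x by (simp add: has_integral_integral)
  ultimately show ?thesis unfolding D_def h_def by simp
qed

lemma abs_int_abs:
  fixes f :: "real \<Rightarrow> real"
  assumes "f absolutely_integrable_on S"
  shows "(\<lambda>t. \<bar>f t\<bar>) absolutely_integrable_on S"
  using absolutely_integrable_norm[OF assms] by (simp add: o_def)

locale sl_coef =
  fixes a b :: real and \<sigma> q \<rho> :: "real \<Rightarrow> real" and s :: real
  assumes ab: "a < b"
  and \<sigma>c: "continuous_on {a..b} \<sigma>" and \<rho>c: "continuous_on {a..b} \<rho>"
  and spos: "s > 0" and \<sigma>s: "\<And>x. x\<in>{a..b} \<Longrightarrow> s \<le> \<sigma> x"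
  and qi: "q absolutely_integrable_on {a..b}"
begin

lemma \<rho>ai: "\<rho> absolutely_integrable_on {a..b}"
  using absolutely_integrable_continuous_real[OF \<rho>c] .

lemma coef_ai: "(\<lambda>t. q t - l * \<rho> t) absolutely_integrable_on {a..b}"
  using set_integral_diff(1)[OF qi set_integrable_mult_right[OF \<rho>ai, of l]] .

lemma sol_props:
  assumes S: "sl_solution \<sigma> q \<rho> a b l y y'"
  shows sol_deriv: "\<And>x. x\<in>{a..b} \<Longrightarrow> (y has_real_derivative y' x) (at x within {a..b})"
    and sol_yc: "continuous_on {a..b} y"
    and sol_gai: "(\<lambda>t. (q t - l * \<rho> t) * y t) absolutely_integrable_on {a..b}"
    and sol_W: "\<And>x. x\<in>{a..b} \<Longrightarrow> \<sigma> x * y' x = \<sigma> a * y' a + integral {a..x} (\<lambda>t. (q t - l * \<rho> t) * y t)"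
    and sol_Wc: "continuous_on {a..b} (\<lambda>x. \<sigma> x * y' x)"
    and sol_y'c: "continuous_on {a..b} y'"
    and sol_y: "\<And>x. x\<in>{a..b} \<Longrightarrow> y x = y a + integral {a..x} y'"
proof -
  show d: "\<And>x. x\<in>{a..b} \<Longrightarrow> (y has_real_derivative y' x) (at x within {a..b})"
    using S unfolding sl_solution_def by blast
  show yc: "continuous_on {a..b} y" using deriv_cont_on d by blast
  show gai: "(\<lambda>t. (q t - l * \<rho> t) * y t) absolutely_integrable_on {a..b}"
    using abs_int_cont_prod[OF yc coef_ai] .
  show W: "\<And>x. x\<in>{a..b} \<Longrightarrow> \<sigma> x * y' x = \<sigma> a * y' a + integral {a..x} (\<lambda>t. (q t - l * \<rho> t) * y t)"
  proof -
    fix x assume x: "x \<in> {a..b}"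
    have "((\<lambda>t. (q t - l * \<rho> t) * y t) has_integral (\<sigma> x * y' x - \<sigma> a * y' a)) {a..x}"
      using S x unfolding sl_solution_def by blast
    then show "\<sigma> x * y' x = \<sigma> a * y' a + integral {a..x} (\<lambda>t. (q t - l * \<rho> t) * y t)"
      by (simp add: integral_unique)
  qed
  have gi: "(\<lambda>t. (q t - l * \<rho> t) * y t) integrable_on {a..b}"
    using gai by (rule set_lebesgue_integral_eq_integral(1))
  have "continuous_on {a..b} (\<lambda>x. \<sigma> a * y' a + integral {a..x} (\<lambda>t. (q t - l * \<rho> t) * y t))"
    by (rule continuous_on_add[OF continuous_on_const indefinite_integral_continuous_1[OF gi]])
  then show Wc: "continuous_on {a..b} (\<lambda>x. \<sigma> x * y' x)"
    by (rule continuous_on_eq) (rule W[symmetric])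
  have "continuous_on {a..b} (\<lambda>x. (\<sigma> x * y' x) / \<sigma> x)"
    using Wc \<sigma>c by (rule continuous_on_divide) (use \<sigma>s spos in force)
  then show y'c: "continuous_on {a..b} y'"
    by (rule continuous_on_eq) (use \<sigma>s spos in force)
  show "\<And>x. x\<in>{a..b} \<Longrightarrow> y x = y a + integral {a..x} y'"
  proof -
    fix x assume x: "x \<in> {a..b}"
    have "(y' has_integral (y x - y a)) {a..x}"
    proof (rule fundamental_theorem_of_calculus)
      show "a \<le> x" using x by simp
      fix t assume t: "t \<in> {a..x}"
      have "(y has_real_derivative y' t) (at t within {a..x})"
        using DERIV_subset[OF d[of t]] t x by auto
      then show "(y has_vector_derivative y' t) (at t within {a..x})"
        by (simp add: has_real_derivative_iff_has_vector_derivative)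
    qed
    then show "y x = y a + integral {a..x} y'" by (simp add: integral_unique)
  qed
qed


lemma diff_est:
  assumes S1: "sl_solution \<sigma> q \<rho> a b l1 y1 y1'" and S2: "sl_solution \<sigma> q \<rho> a b l2 y2 y2'"
   and \<Lambda>: "\<bar>l2\<bar> \<le> \<Lambda>" and x: "x \<in> {a..b}"
  shows "\<bar>y2 x - y1 x\<bar> + \<bar>\<sigma> x * y2' x - \<sigma> x * y1' x\<bar> \<le> (\<bar>y2 a - y1 a\<bar> + \<bar>\<sigma> a * y2' a - \<sigma> a * y1' a\<bar>)
     + \<bar>l1 - l2\<bar> * integral {a..b} (\<lambda>t. \<bar>\<rho> t\<bar> * \<bar>y1 t\<bar>)
     + integral {a..x} (\<lambda>t. (1/s + \<bar>q t\<bar> + \<Lambda> * \<bar>\<rho> t\<bar>) * (\<bar>y2 t - y1 t\<bar> + \<bar>\<sigma> t * y2' t - \<sigma> t * y1' t\<bar>))"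
proof -
  define z where "z t = y2 t - y1 t" for t
  define w where "w t = \<sigma> t * y2' t - \<sigma> t * y1' t" for t
  define E where "E t = \<bar>z t\<bar> + \<bar>w t\<bar>" for t
  have xa: "a \<le> x" "x \<le> b" using x by auto
  have \<Lambda>0: "0 \<le> \<Lambda>" using \<Lambda> by linarith
  have y1c: "continuous_on {a..b} y1" using sol_yc[OF S1] .
  have y2c: "continuous_on {a..b} y2" using sol_yc[OF S2] .
  have zc: "continuous_on {a..b} z" unfolding z_def by (rule continuous_on_diff[OF y2c y1c])
  have wc: "continuous_on {a..b} w" unfolding w_def using sol_Wc[OF S2] sol_Wc[OF S1] by (rule continuous_on_diff)
  have Ec: "continuous_on {a..b} E" unfolding E_def
    by (intro continuous_on_add continuous_on_rabs zc wc)
  have Enn: "0 \<le> E t" for t by (simp add: E_def)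
  have y1'i: "y1' integrable_on {a..x}" using int_sub[OF integrable_continuous_real[OF sol_y'c[OF S1]] order_refl xa(2)] by simp
  have y2'i: "y2' integrable_on {a..x}" using int_sub[OF integrable_continuous_real[OF sol_y'c[OF S2]] order_refl xa(2)] by simp
  have zx: "z x - z a = integral {a..x} (\<lambda>t. y2' t - y1' t)"
    using sol_y[OF S1 x] sol_y[OF S2 x] integral_diff[OF y2'i y1'i] by (simp add: z_def)
  have Esc: "continuous_on {a..b} (\<lambda>t. (1/s) * E t)" by (rule continuous_on_mult[OF continuous_on_const Ec])
  have Es_i: "(\<lambda>t. (1/s) * E t) integrable_on {a..x}"
    using int_sub[OF integrable_continuous_real[OF Esc] order_refl xa(2)] .
  have bz: "\<bar>z x - z a\<bar> \<le> integral {a..x} (\<lambda>t. (1/s) * E t)"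
  proof -
    have "norm (integral {a..x} (\<lambda>t. y2' t - y1' t)) \<le> integral {a..x} (\<lambda>t. (1/s) * E t)"
    proof (rule integral_norm_bound_integral)
      show "(\<lambda>t. y2' t - y1' t) integrable_on {a..x}" using integrable_diff[OF y2'i y1'i] .
      show "(\<lambda>t. (1/s) * E t) integrable_on {a..x}" using Es_i .
      fix t assume t: "t \<in> {a..x}"
      hence tab: "t \<in> {a..b}" using xa by auto
      have st: "s \<le> \<sigma> t" using \<sigma>s[OF tab] .
      have "\<bar>w t\<bar> = \<sigma> t * \<bar>y2' t - y1' t\<bar>" using st spos by (simp add: w_def abs_mult right_diff_distrib[symmetric])
      hence "s * \<bar>y2' t - y1' t\<bar> \<le> \<bar>w t\<bar>" using st by (simp add: mult_right_mono)
      also have "\<dots> \<le> E t" by (simp add: E_def)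
      finally have "s * \<bar>y2' t - y1' t\<bar> \<le> E t" .
      then show "norm (y2' t - y1' t) \<le> (1/s) * E t" using spos by (simp add: field_simps)
    qed
    then show ?thesis using zx by simp
  qed
  define g1 where "g1 t = (q t - l1 * \<rho> t) * y1 t" for t
  define g2 where "g2 t = (q t - l2 * \<rho> t) * y2 t" for t
  have g1i: "g1 integrable_on {a..x}" unfolding g1_def[abs_def]
    using int_sub[OF set_lebesgue_integral_eq_integral(1)[OF sol_gai[OF S1]] order_refl xa(2)] .
  have g2i: "g2 integrable_on {a..x}" unfolding g2_def[abs_def]
    using int_sub[OF set_lebesgue_integral_eq_integral(1)[OF sol_gai[OF S2]] order_refl xa(2)] .
  have wx: "w x - w a = integral {a..x} (\<lambda>t. g2 t - g1 t)"
    using sol_W[OF S1 x] sol_W[OF S2 x] integral_diff[OF g2i g1i] unfolding w_def g1_def g2_def by simp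
  define k2 where "k2 t = \<bar>q t\<bar> + \<Lambda> * \<bar>\<rho> t\<bar>" for t
  have k2ai: "k2 absolutely_integrable_on {a..b}"
    unfolding k2_def using set_integral_add(1)[OF abs_int_abs[OF qi] set_integrable_mult_right[OF abs_int_abs[OF \<rho>ai], of \<Lambda>]] .
  have k2Ei: "(\<lambda>t. k2 t * E t) integrable_on {a..b}"
    using set_lebesgue_integral_eq_integral(1)[OF abs_int_cont_prod[OF Ec k2ai]] .
  have ry_c: "continuous_on {a..b} (\<lambda>t. \<bar>\<rho> t\<bar> * \<bar>y1 t\<bar>)"
    by (intro continuous_on_mult continuous_on_rabs \<rho>c y1c)
  have ryi: "(\<lambda>t. \<bar>\<rho> t\<bar> * \<bar>y1 t\<bar>) integrable_on {a..b}" using integrable_continuous_real[OF ry_c] .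
  define c where "c = \<bar>l1 - l2\<bar>"
  have c0: "0 \<le> c" by (simp add: c_def)
  have bw: "\<bar>w x - w a\<bar> \<le> integral {a..x} (\<lambda>t. k2 t * E t) + c * integral {a..x} (\<lambda>t. \<bar>\<rho> t\<bar> * \<bar>y1 t\<bar>)"
  proof -
    have i1: "(\<lambda>t. k2 t * E t) integrable_on {a..x}" using int_sub[OF k2Ei order_refl xa(2)] .
    have i2: "(\<lambda>t. c * (\<bar>\<rho> t\<bar> * \<bar>y1 t\<bar>)) integrable_on {a..x}"
      using integrable_on_cmult_left[OF int_sub[OF ryi order_refl xa(2)]] by simp
    have "norm (integral {a..x} (\<lambda>t. g2 t - g1 t)) \<le> integral {a..x} (\<lambda>t. k2 t * E t + c * (\<bar>\<rho> t\<bar> * \<bar>y1 t\<bar>))"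
    proof (rule integral_norm_bound_integral)
      show "(\<lambda>t. g2 t - g1 t) integrable_on {a..x}" using integrable_diff[OF g2i g1i] .
      show "(\<lambda>t. k2 t * E t + c * (\<bar>\<rho> t\<bar> * \<bar>y1 t\<bar>)) integrable_on {a..x}" using integrable_add[OF i1 i2] .
      fix t assume t: "t \<in> {a..x}"
      have eq: "g2 t - g1 t = (q t - l2 * \<rho> t) * z t + (l1 - l2) * (\<rho> t * y1 t)"
        by (simp add: g1_def g2_def z_def algebra_simps)
      have "\<bar>(q t - l2 * \<rho> t) * z t\<bar> \<le> k2 t * E t"
      proof -
        have "\<bar>q t - l2 * \<rho> t\<bar> \<le> \<bar>q t\<bar> + \<bar>l2\<bar> * \<bar>\<rho> t\<bar>" by (simp add: abs_mult[symmetric] abs_triangle_ineq4)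
        also have "\<dots> \<le> k2 t" unfolding k2_def using \<Lambda> by (simp add: mult_right_mono)
        finally have h1: "\<bar>q t - l2 * \<rho> t\<bar> \<le> k2 t" .
        have h2: "\<bar>z t\<bar> \<le> E t" by (simp add: E_def)
        have "\<bar>(q t - l2 * \<rho> t) * z t\<bar> = \<bar>q t - l2 * \<rho> t\<bar> * \<bar>z t\<bar>" by (simp add: abs_mult)
        also have "\<dots> \<le> k2 t * E t" by (rule mult_mono[OF h1 h2]) (use \<Lambda>0 in \<open>auto simp: k2_def E_def\<close>)
        finally show ?thesis .
      qed
      moreover have "\<bar>(l1 - l2) * (\<rho> t * y1 t)\<bar> = c * (\<bar>\<rho> t\<bar> * \<bar>y1 t\<bar>)" by (simp add: c_def abs_mult)
      ultimately show "norm (g2 t - g1 t) \<le> k2 t * E t + c * (\<bar>\<rho> t\<bar> * \<bar>y1 t\<bar>)"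
        unfolding eq real_norm_def by (smt (verit) abs_triangle_ineq)
    qed
    also have "\<dots> = integral {a..x} (\<lambda>t. k2 t * E t) + c * integral {a..x} (\<lambda>t. \<bar>\<rho> t\<bar> * \<bar>y1 t\<bar>)"
      using integral_add[OF i1 i2] by simp
    finally show ?thesis using wx by simp
  qed
  have ryb: "integral {a..x} (\<lambda>t. \<bar>\<rho> t\<bar> * \<bar>y1 t\<bar>) \<le> integral {a..b} (\<lambda>t. \<bar>\<rho> t\<bar> * \<bar>y1 t\<bar>)"
  proof -
    have "0 \<le> integral {x..b} (\<lambda>t. \<bar>\<rho> t\<bar> * \<bar>y1 t\<bar>)"
      by (rule integral_nonneg[OF int_sub[OF ryi xa(1) order_refl]]) simp
    then show ?thesis using int_split[OF ryi xa(1) xa(2) order_refl] by simp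
  qed
  have kE: "integral {a..x} (\<lambda>t. (1/s + \<bar>q t\<bar> + \<Lambda> * \<bar>\<rho> t\<bar>) * E t)
      = integral {a..x} (\<lambda>t. (1/s) * E t) + integral {a..x} (\<lambda>t. k2 t * E t)"
  proof -
    have "integral {a..x} (\<lambda>t. (1/s + \<bar>q t\<bar> + \<Lambda> * \<bar>\<rho> t\<bar>) * E t) = integral {a..x} (\<lambda>t. (1/s) * E t + k2 t * E t)"
      by (rule integral_cong) (simp add: k2_def algebra_simps)
    also have "\<dots> = integral {a..x} (\<lambda>t. (1/s) * E t) + integral {a..x} (\<lambda>t. k2 t * E t)"
      using integral_add[OF Es_i int_sub[OF k2Ei order_refl xa(2)]] by simp
    finally show ?thesis .
  qed
  have "E x \<le> E a + \<bar>z x - z a\<bar> + \<bar>w x - w a\<bar>" unfolding E_def by linarith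
  also have "\<dots> \<le> E a + c * integral {a..b} (\<lambda>t. \<bar>\<rho> t\<bar> * \<bar>y1 t\<bar>) + integral {a..x} (\<lambda>t. (1/s + \<bar>q t\<bar> + \<Lambda> * \<bar>\<rho> t\<bar>) * E t)"
    using bz bw kE mult_left_mono[OF ryb c0] by linarith
  finally show ?thesis unfolding E_def z_def w_def c_def .
qed


lemma k_ai: "(\<lambda>t. 1/s + \<bar>q t\<bar> + \<Lambda> * \<bar>\<rho> t\<bar>) absolutely_integrable_on {a..b}"
proof -
  have c: "(\<lambda>t. 1/s) absolutely_integrable_on {a..b}"
    by (rule absolutely_integrable_continuous_real) (rule continuous_on_const)
  show ?thesis
    using set_integral_add(1)[OF set_integral_add(1)[OF c abs_int_abs[OF qi]] set_integrable_mult_right[OF abs_int_abs[OF \<rho>ai], of \<Lambda>]] .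
qed

lemma diff_bound:
  assumes S1: "sl_solution \<sigma> q \<rho> a b l1 y1 y1'" and S2: "sl_solution \<sigma> q \<rho> a b l2 y2 y2'"
   and \<Lambda>: "\<bar>l2\<bar> \<le> \<Lambda>" and x: "x \<in> {a..b}"
  shows "\<bar>y2 x - y1 x\<bar> + \<bar>\<sigma> x * y2' x - \<sigma> x * y1' x\<bar> \<le> ((\<bar>y2 a - y1 a\<bar> + \<bar>\<sigma> a * y2' a - \<sigma> a * y1' a\<bar>)
     + \<bar>l1 - l2\<bar> * integral {a..b} (\<lambda>t. \<bar>\<rho> t\<bar> * \<bar>y1 t\<bar>)) * exp (2 * integral {a..b} (\<lambda>t. 1/s + \<bar>q t\<bar> + \<Lambda> * \<bar>\<rho> t\<bar>))"
proof -
  define E where "E t = \<bar>y2 t - y1 t\<bar> + \<bar>\<sigma> t * y2' t - \<sigma> t * y1' t\<bar>" for t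
  have Ec: "continuous_on {a..b} E" unfolding E_def
    by (intro continuous_on_add continuous_on_rabs continuous_on_diff sol_yc[OF S1] sol_yc[OF S2] sol_Wc[OF S1] sol_Wc[OF S2])
  have \<Lambda>0: "0 \<le> \<Lambda>" using \<Lambda> by linarith
  show ?thesis
    unfolding E_def[symmetric]
  proof (rule gronwall[OF _ Ec _ k_ai _ _ x])
    show "a \<le> b" using ab by simp
    show "\<And>x. 0 \<le> E x" by (simp add: E_def)
    show "\<And>x. 0 \<le> 1/s + \<bar>q x\<bar> + \<Lambda> * \<bar>\<rho> x\<bar>" using spos \<Lambda>0 by (simp add: add_nonneg_nonneg)
    fix x assume "x \<in> {a..b}"
    then show "E x \<le> E a + \<bar>l1 - l2\<bar> * integral {a..b} (\<lambda>t. \<bar>\<rho> t\<bar> * \<bar>y1 t\<bar>) + integral {a..x} (\<lambda>t. (1/s + \<bar>q t\<bar> + \<Lambda> * \<bar>\<rho> t\<bar>) * E t)"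
      unfolding E_def by (rule diff_est[OF S1 S2 \<Lambda>])
  qed
qed

lemma uniq:
  assumes S1: "sl_solution \<sigma> q \<rho> a b l y1 y1'" and S2: "sl_solution \<sigma> q \<rho> a b l y2 y2'"
   and i1: "y1 a = y2 a" and i2: "y1' a = y2' a" and x: "x \<in> {a..b}"
  shows "y2 x = y1 x" "y2' x = y1' x"
proof -
  have "\<bar>y2 x - y1 x\<bar> + \<bar>\<sigma> x * y2' x - \<sigma> x * y1' x\<bar> \<le> 0"
    using diff_bound[OF S1 S2 order_refl x] i1 i2 by simp
  hence h1: "\<bar>y2 x - y1 x\<bar> = 0" "\<bar>\<sigma> x * y2' x - \<sigma> x * y1' x\<bar> = 0"
    using abs_ge_zero[of "y2 x - y1 x"] abs_ge_zero[of "\<sigma> x * y2' x - \<sigma> x * y1' x"]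
    by linarith+
  hence "y2 x = y1 x" "\<sigma> x * (y2' x - y1' x) = 0" by (simp_all add: right_diff_distrib)
  moreover have "\<sigma> x \<noteq> 0" using \<sigma>s[OF x] spos by auto
  ultimately show "y2 x = y1 x" "y2' x = y1' x" by auto
qed

end

lemma sol_scale:
  assumes "sl_solution \<sigma> q \<rho> a b l y y'"
  shows "sl_solution \<sigma> q \<rho> a b l (\<lambda>x. c * y x) (\<lambda>x. c * y' x)"
proof -
  have d: "\<And>x. x\<in>{a..b} \<Longrightarrow> (y has_real_derivative y' x) (at x within {a..b})"
   and i: "\<And>x. x\<in>{a..b} \<Longrightarrow> ((\<lambda>t. (q t - l * \<rho> t) * y t) has_integral (\<sigma> x * y' x - \<sigma> a * y' a)) {a..x}"
    using assms unfolding sl_solution_def by auto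
  show ?thesis unfolding sl_solution_def
  proof (intro conjI ballI)
    fix x assume x: "x \<in> {a..b}"
    show "((\<lambda>x. c * y x) has_real_derivative c * y' x) (at x within {a..b})"
      by (rule DERIV_cmult[OF d[OF x]])
    have "((\<lambda>t. c * ((q t - l * \<rho> t) * y t)) has_integral c * (\<sigma> x * y' x - \<sigma> a * y' a)) {a..x}"
      by (rule has_integral_mult_right[OF i[OF x]])
    then show "((\<lambda>t. (q t - l * \<rho> t) * (c * y t)) has_integral \<sigma> x * (c * y' x) - \<sigma> a * (c * y' a)) {a..x}"
      by (simp add: algebra_simps)
  qed
qed

lemma sol_zero: "sl_solution \<sigma> q \<rho> a b l (\<lambda>x. 0) (\<lambda>x. 0)"
  unfolding sl_solution_def by auto

lemma sl_reflect:
  assumes S: "sl_solution \<sigma> q \<rho> a b l y y'" and ab: "a \<le> b"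
  shows "sl_solution (\<lambda>x. \<sigma> (-x)) (\<lambda>x. q (-x)) (\<lambda>x. \<rho> (-x)) (-b) (-a) l (\<lambda>x. y (-x)) (\<lambda>x. - y' (-x))"
proof -
  have d: "\<And>x. x\<in>{a..b} \<Longrightarrow> (y has_real_derivative y' x) (at x within {a..b})"
   and i: "\<And>x. x\<in>{a..b} \<Longrightarrow> ((\<lambda>t. (q t - l * \<rho> t) * y t) has_integral (\<sigma> x * y' x - \<sigma> a * y' a)) {a..x}"
    using S unfolding sl_solution_def by auto
  define g where "g t = (q t - l * \<rho> t) * y t" for t
  have gi: "g integrable_on {a..b}" using i[of b] ab unfolding g_def[abs_def] by auto
  show ?thesis unfolding sl_solution_def
  proof (intro conjI ballI)
    fix x assume x: "x \<in> {-b..-a}"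
    have "(y has_vector_derivative y' (-x)) (at (-x) within {a..b})"
      using d[of "-x"] x by (simp add: has_real_derivative_iff_has_vector_derivative)
    moreover have "uminus ` {-b..-a} = {a..b}" by simp
    ultimately have d2: "(y has_vector_derivative y' (-x)) (at (uminus x) within uminus ` {-b..-a})" by simp
    have "((y \<circ> uminus) has_vector_derivative ((-1) *\<^sub>R y' (-x))) (at x within {-b..-a})"
      by (rule vector_diff_chain_within[OF _ d2]) (auto intro!: derivative_eq_intros)
    then show "((\<lambda>x. y (-x)) has_real_derivative - y' (- x)) (at x within {-b..-a})"
      by (simp add: has_real_derivative_iff_has_vector_derivative o_def)
    have x1: "a \<le> -x" "-x \<le> b" using x by auto
    have "integral {a..b} g = integral {a..-x} g + integral {-x..b} g"
      using int_split[OF gi x1(1) x1(2) order_refl] .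
    moreover have "integral {a..b} g = \<sigma> b * y' b - \<sigma> a * y' a" using i[of b] ab by (simp add: integral_unique g_def[abs_def])
    moreover have "integral {a..-x} g = \<sigma> (-x) * y' (-x) - \<sigma> a * y' a" using i[of "-x"] x1 by (simp add: integral_unique g_def[abs_def])
    ultimately have "integral {-x..b} g = \<sigma> b * y' b - \<sigma> (-x) * y' (-x)" by simp
    moreover have "(g has_integral integral {-x..b} g) {-x..b}"
      using int_sub[OF gi x1(1) order_refl] by (simp add: has_integral_integral)
    ultimately have "(g has_integral (\<sigma> b * y' b - \<sigma> (-x) * y' (-x))) {-x..b}" by simp
    hence "((\<lambda>t. g (-t)) has_integral (\<sigma> b * y' b - \<sigma> (-x) * y' (-x))) {-b..- (-x)}"
      by (simp only: has_integral_reflect_real)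
    then show "((\<lambda>t. (q (-t) - l * \<rho> (-t)) * y (-t)) has_integral
        \<sigma> (-x) * - y' (-x) - \<sigma> (- (-b)) * - y' (- (-b))) {-b..x}"
      by (simp add: g_def)
  qed
qed

lemma integral_pos_cont:
  fixes f :: "real \<Rightarrow> real"
  assumes ab: "a < b" and fc: "continuous_on {a..b} f" and nn: "\<And>x. x\<in>{a..b} \<Longrightarrow> 0 \<le> f x" and fb: "f b > 0"
  shows "integral {a..b} f > 0"
proof -
  have "continuous (at b within {a..b}) f" using fc ab by (simp add: continuous_on_eq_continuous_within)
  then obtain \<delta> where dpos: "\<delta> > 0" and d: "\<And>x. x \<in> {a..b} \<Longrightarrow> dist x b < \<delta> \<Longrightarrow> dist (f x) (f b) < f b / 2"
    unfolding continuous_within_eps_delta by (erule_tac x="f b / 2" in allE) (use fb in auto)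
  define c where "c = max a (b - \<delta>/2)"
  have c: "a \<le> c" "c < b" using ab dpos by (auto simp: c_def)
  have fi: "f integrable_on {a..b}" by (rule integrable_continuous_real[OF fc])
  have "integral {c..b} (\<lambda>x. f b / 2) \<le> integral {c..b} f"
  proof (rule integral_le)
    show "(\<lambda>x. f b / 2) integrable_on {c..b}" by (rule integrable_continuous_real) (rule continuous_on_const)
    show "f integrable_on {c..b}" using int_sub[OF fi c(1) order_refl] .
    fix x assume x: "x \<in> {c..b}"
    have "dist x b < \<delta>" using x dpos by (auto simp: c_def dist_real_def)
    then have "dist (f x) (f b) < f b / 2" using d[of x] x c by auto
    then have "\<bar>f x - f b\<bar> < f b / 2" by (simp add: dist_real_def)
    then show "f b / 2 \<le> f x" by linarith
  qed
  moreover have "integral {c..b} (\<lambda>x. f b / 2) > 0" using c fb by simp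
  moreover have "0 \<le> integral {a..c} f"
    by (rule integral_nonneg[OF int_sub[OF fi order_refl]]) (use c nn in auto)
  moreover have "integral {a..b} f = integral {a..c} f + integral {c..b} f"
    using int_split[OF fi c(1) less_imp_le[OF c(2)] order_refl] by simp
  ultimately show ?thesis by linarith
qed

lemma isCont_within: "isCont f x \<Longrightarrow> (f \<longlongrightarrow> f x) (at x within S)"
  by (metis continuous_at_imp_continuous_at_within continuous_within)

locale leftSL = sl_coef "-1" 0 \<sigma> q \<rho> s for \<sigma> q \<rho> s +
  fixes u ux :: "real \<Rightarrow> real \<Rightarrow> real" and r :: real
  assumes rpos: "r > 0" and \<rho>r: "\<And>x. x\<in>{-1..0} \<Longrightarrow> r \<le> \<rho> x"
  and qnn: "\<And>h. continuous_on {-1..0} h \<Longrightarrow> (\<And>x. x\<in>{-1..0} \<Longrightarrow> 0 \<le> h x) \<Longrightarrow> 0 \<le> integral {-1..0} (\<lambda>t. q t * h t)"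
  and usol: "\<And>l. sl_solution \<sigma> q \<rho> (-1) 0 l (u l) (ux l)"
  and uinit: "\<And>l. u l (-1) = 0" "\<And>l. ux l (-1) = 1"
begin

lemma u_nonzero: "\<exists>x\<in>{-1..0}. u l x \<noteq> 0"
proof (rule ccontr)
  assume "\<not> ?thesis"
  hence z: "\<And>x. x \<in> {-1..0} \<Longrightarrow> u l x = 0" by auto
  have d: "(u l has_vector_derivative ux l (-1)) (at (-1) within {-1..0})"
    using sol_deriv[OF usol, of "-1" l] by (simp add: has_real_derivative_iff_has_vector_derivative)
  have "((\<lambda>x. 0) has_vector_derivative ux l (-1)) (at (-1) within {-1..0})"
    by (rule has_vector_derivative_transform_within[OF d zero_less_one]) (auto simp: z)
  moreover have "((\<lambda>x. 0) has_vector_derivative 0) (at (-1) within {-1..0})" by simp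
  ultimately have "ux l (-1) = 0"
    using vector_derivative_unique_within_closed_interval[of "-1::real" 0 "-1" "\<lambda>x. 0" "ux l (-1)" 0]
    by (simp add: box_real)
  then show False using uinit by simp
qed

lemma eig_iff: "u l 0 = 0 \<longleftrightarrow> dirichlet_eigenvalue \<sigma> q \<rho> (-1) 0 l"
proof
  assume "u l 0 = 0"
  then show "dirichlet_eigenvalue \<sigma> q \<rho> (-1) 0 l"
    unfolding dirichlet_eigenvalue_def using usol uinit u_nonzero by blast
next
  assume "dirichlet_eigenvalue \<sigma> q \<rho> (-1) 0 l"
  then obtain y y' x0 where S: "sl_solution \<sigma> q \<rho> (-1) 0 l y y'" and y: "y (-1) = 0" "y 0 = 0"
    and x0: "x0 \<in> {-1..0}" "y x0 \<noteq> 0"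
    unfolding dirichlet_eigenvalue_def by blast
  define c where "c = y' (-1)"
  have S1: "sl_solution \<sigma> q \<rho> (-1) 0 l (\<lambda>x. c * u l x) (\<lambda>x. c * ux l x)" by (rule sol_scale[OF usol])
  have eq: "y x = c * u l x" if "x \<in> {-1..0}" for x
    using uniq(1)[OF S1 S _ _ that] y uinit by (simp add: c_def)
  have "c \<noteq> 0" using eq[OF x0(1)] x0(2) by auto
  moreover have "c * u l 0 = 0" using eq[of 0] y by simp
  ultimately show "u l 0 = 0" by simp
qed

lemma refl_coef: "sl_coef 0 1 (\<lambda>x. \<sigma> (-x)) (\<lambda>x. q (-x)) (\<lambda>x. \<rho> (-x)) s"
proof
  show "(0::real) < 1" by simp
  have m: "continuous_on {0..1} (uminus :: real \<Rightarrow> real)" by (intro continuous_intros)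
  have im: "uminus ` {0..1::real} \<subseteq> {-1..0}" by auto
  show "continuous_on {0..1} (\<lambda>x. \<sigma> (-x))"
    using continuous_on_compose[OF m continuous_on_subset[OF \<sigma>c im]] by (simp add: o_def)
  show "continuous_on {0..1} (\<lambda>x. \<rho> (-x))"
    using continuous_on_compose[OF m continuous_on_subset[OF \<rho>c im]] by (simp add: o_def)
  show "0 < s" by (rule spos)
  show "\<And>x. x \<in> {0..1} \<Longrightarrow> s \<le> \<sigma> (- x)" using \<sigma>s by auto
  have "(\<lambda>x. q (-x)) absolutely_integrable_on {- 0..- (-1::real)}" using qi by (simp only: absolutely_integrable_reflect_real)
  then show "(\<lambda>x. q (-x)) absolutely_integrable_on {0..1}" by simp
qed

lemma ux_nonzero: assumes "u l 0 = 0" shows "ux l 0 \<noteq> 0"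
proof
  assume ux0: "ux l 0 = 0"
  interpret R: sl_coef 0 1 "\<lambda>x. \<sigma> (-x)" "\<lambda>x. q (-x)" "\<lambda>x. \<rho> (-x)" s by (rule refl_coef)
  have "sl_solution (\<lambda>x. \<sigma> (-x)) (\<lambda>x. q (-x)) (\<lambda>x. \<rho> (-x)) (-0) (-(-1)) l (\<lambda>x. u l (-x)) (\<lambda>x. - ux l (-x))"
    by (rule sl_reflect[OF usol]) simp
  hence S: "sl_solution (\<lambda>x. \<sigma> (-x)) (\<lambda>x. q (-x)) (\<lambda>x. \<rho> (-x)) 0 1 l (\<lambda>x. u l (-x)) (\<lambda>x. - ux l (-x))" by simp
  have "u l x = 0" if "x \<in> {-1..0}" for x
  proof -
    have "(\<lambda>x. u l (-x)) (-x) = (\<lambda>x. 0) (-x)"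
      by (rule R.uniq(1)[OF sol_zero S]) (use assms ux0 that in auto)
    then show ?thesis by simp
  qed
  then show False using u_nonzero by blast
qed

end

lemma lip_isCont:
  fixes f :: "real \<Rightarrow> real"
  assumes "\<And>\<mu>. \<bar>\<mu> - l\<bar> \<le> 1 \<Longrightarrow> \<bar>f \<mu> - f l\<bar> \<le> C * \<bar>\<mu> - l\<bar>"
  shows "isCont f l"
  unfolding continuous_at_eps_delta
proof (intro allI impI)
  fix e :: real assume e: "e > 0"
  define d where "d = min 1 (e / (\<bar>C\<bar> + 1))"
  have dpos: "d > 0" using e by (simp add: d_def)
  show "\<exists>d>0. \<forall>x'. dist x' l < d \<longrightarrow> dist (f x') (f l) < e"
  proof (intro exI[of _ d] conjI allI impI dpos)
    fix x' assume "dist x' l < d"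
    hence h1: "\<bar>x' - l\<bar> < d" by (simp add: dist_real_def)
    hence "\<bar>x' - l\<bar> \<le> 1" by (simp add: d_def)
    hence "\<bar>f x' - f l\<bar> \<le> C * \<bar>x' - l\<bar>" by (rule assms)
    show "dist (f x') (f l) < e"
    proof -
      have "\<bar>f x' - f l\<bar> < (\<bar>C\<bar> + 1) * d \<or> \<bar>x' - l\<bar> = 0"
      proof (cases "\<bar>x' - l\<bar> = 0")
        case False
        hence "(\<bar>C\<bar> + 1) * \<bar>x' - l\<bar> < (\<bar>C\<bar> + 1) * d" using h1 by (intro mult_strict_left_mono) auto
        moreover have "\<bar>f x' - f l\<bar> \<le> (\<bar>C\<bar> + 1) * \<bar>x' - l\<bar>"
        proof -
          have "C * \<bar>x' - l\<bar> \<le> (\<bar>C\<bar> + 1) * \<bar>x' - l\<bar>" by (intro mult_right_mono) auto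
          then show ?thesis using assms[of x'] \<open>\<bar>x' - l\<bar> \<le> 1\<close> by linarith
        qed
        ultimately show ?thesis by linarith
      qed simp
      moreover have "(\<bar>C\<bar> + 1) * d \<le> e"
        using mult_left_mono[of d "e / (\<bar>C\<bar> + 1)" "\<bar>C\<bar> + 1"] by (simp add: d_def)
      ultimately show ?thesis using e by (auto simp: dist_real_def)
    qed
  qed
qed

context leftSL begin

definition J where "J l \<mu> = integral {-1..0} (\<lambda>t. \<rho> t * u l t * u \<mu> t)"
definition m where "m l = \<sigma> 0 * ux l 0 / u l 0"

lemma u_lip: obtains C where "C \<ge> 0" "\<And>\<mu> (x::real). \<bar>\<mu> - l\<bar> \<le> 1 \<Longrightarrow> x \<in> {-1..0} \<Longrightarrow>
    \<bar>u \<mu> x - u l x\<bar> + \<bar>\<sigma> x * ux \<mu> x - \<sigma> x * ux l x\<bar> \<le> C * \<bar>\<mu> - l\<bar>"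
proof -
  define I where "I = integral {-1..0} (\<lambda>t. \<bar>\<rho> t\<bar> * \<bar>u l t\<bar>)"
  define K where "K = integral {-1..0} (\<lambda>t. 1/s + \<bar>q t\<bar> + (\<bar>l\<bar> + 1) * \<bar>\<rho> t\<bar>)"
  have I0: "I \<ge> 0" unfolding I_def
    by (rule integral_nonneg[OF integrable_continuous_real]) (auto intro!: continuous_on_mult continuous_on_rabs \<rho>c sol_yc[OF usol])
  show ?thesis
  proof (rule that[of "I * exp (2 * K)"])
    show "I * exp (2 * K) \<ge> 0" using I0 by simp
    fix \<mu> and x :: real assume \<mu>: "\<bar>\<mu> - l\<bar> \<le> 1" and x: "x \<in> {-1..0}"
    have \<Lambda>: "\<bar>\<mu>\<bar> \<le> \<bar>l\<bar> + 1" using \<mu> by linarith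
    have "\<bar>u \<mu> x - u l x\<bar> + \<bar>\<sigma> x * ux \<mu> x - \<sigma> x * ux l x\<bar> \<le> (0 + \<bar>l - \<mu>\<bar> * I) * exp (2 * K)"
      using diff_bound[OF usol usol \<Lambda> x] uinit unfolding I_def K_def by simp
    also have "\<dots> = I * exp (2 * K) * \<bar>\<mu> - l\<bar>" by (simp add: abs_minus_commute)
    finally show "\<bar>u \<mu> x - u l x\<bar> + \<bar>\<sigma> x * ux \<mu> x - \<sigma> x * ux l x\<bar> \<le> I * exp (2 * K) * \<bar>\<mu> - l\<bar>" .
  qed
qed

lemma u0_cont: "isCont (\<lambda>\<mu>. u \<mu> 0) l"
proof -
  obtain C where C: "\<And>\<mu> (x::real). \<bar>\<mu> - l\<bar> \<le> 1 \<Longrightarrow> x \<in> {-1..0} \<Longrightarrow>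
    \<bar>u \<mu> x - u l x\<bar> + \<bar>\<sigma> x * ux \<mu> x - \<sigma> x * ux l x\<bar> \<le> C * \<bar>\<mu> - l\<bar>" using u_lip by blast
  show ?thesis
    by (rule lip_isCont[of _ _ C]) (use C[of _ 0] in \<open>force\<close>)
qed

lemma ux0_cont: "isCont (\<lambda>\<mu>. \<sigma> 0 * ux \<mu> 0) l"
proof -
  obtain C where C: "\<And>\<mu> (x::real). \<bar>\<mu> - l\<bar> \<le> 1 \<Longrightarrow> x \<in> {-1..0} \<Longrightarrow>
    \<bar>u \<mu> x - u l x\<bar> + \<bar>\<sigma> x * ux \<mu> x - \<sigma> x * ux l x\<bar> \<le> C * \<bar>\<mu> - l\<bar>" using u_lip by blast
  show ?thesis
    by (rule lip_isCont[of _ _ C]) (use C[of _ 0] in \<open>force\<close>)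
qed

lemma J_cont: "isCont (J l) l"
proof -
  obtain C where C0: "C \<ge> 0" and C: "\<And>\<mu> (x::real). \<bar>\<mu> - l\<bar> \<le> 1 \<Longrightarrow> x \<in> {-1..0} \<Longrightarrow>
    \<bar>u \<mu> x - u l x\<bar> + \<bar>\<sigma> x * ux \<mu> x - \<sigma> x * ux l x\<bar> \<le> C * \<bar>\<mu> - l\<bar>" using u_lip by blast
  define I where "I = integral {-1..0} (\<lambda>t. \<bar>\<rho> t\<bar> * \<bar>u l t\<bar>)"
  have ci: "\<And>\<mu>. continuous_on {-1..0} (\<lambda>t. \<rho> t * u l t * u \<mu> t)"
    by (intro continuous_on_mult \<rho>c sol_yc[OF usol])
  show ?thesis
  proof (rule lip_isCont[of _ _ "I * C"])
    fix \<mu> assume \<mu>: "\<bar>\<mu> - l\<bar> \<le> 1"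
    have "J l \<mu> - J l l = integral {-1..0} (\<lambda>t. \<rho> t * u l t * u \<mu> t - \<rho> t * u l t * u l t)"
      unfolding J_def by (rule integral_diff[symmetric]) (auto intro: integrable_continuous_real ci)
    also have "\<bar>\<dots>\<bar> \<le> integral {-1..0} (\<lambda>t. (\<bar>\<rho> t\<bar> * \<bar>u l t\<bar>) * (C * \<bar>\<mu> - l\<bar>))"
    proof -
      have "norm (integral {-1..0} (\<lambda>t. \<rho> t * u l t * u \<mu> t - \<rho> t * u l t * u l t)) \<le> integral {-1..0} (\<lambda>t. (\<bar>\<rho> t\<bar> * \<bar>u l t\<bar>) * (C * \<bar>\<mu> - l\<bar>))"
      proof (rule integral_norm_bound_integral)
        show "(\<lambda>t. \<rho> t * u l t * u \<mu> t - \<rho> t * u l t * u l t) integrable_on {-1..0}"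
          by (intro integrable_diff integrable_continuous_real ci)
        show "(\<lambda>t. (\<bar>\<rho> t\<bar> * \<bar>u l t\<bar>) * (C * \<bar>\<mu> - l\<bar>)) integrable_on {-1..0}"
          by (intro integrable_continuous_real continuous_on_mult continuous_on_rabs \<rho>c sol_yc[OF usol] continuous_on_const)
        fix t :: real assume t: "t \<in> {-1..0}"
        have "\<bar>u \<mu> t - u l t\<bar> \<le> C * \<bar>\<mu> - l\<bar>" using C[OF \<mu> t] by linarith
        hence "(\<bar>\<rho> t\<bar> * \<bar>u l t\<bar>) * \<bar>u \<mu> t - u l t\<bar> \<le> (\<bar>\<rho> t\<bar> * \<bar>u l t\<bar>) * (C * \<bar>\<mu> - l\<bar>)"
          by (intro mult_left_mono) auto
        moreover have "\<rho> t * u l t * u \<mu> t - \<rho> t * u l t * u l t = (\<rho> t * u l t) * (u \<mu> t - u l t)"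
          by (simp add: algebra_simps)
        ultimately show "norm (\<rho> t * u l t * u \<mu> t - \<rho> t * u l t * u l t) \<le> (\<bar>\<rho> t\<bar> * \<bar>u l t\<bar>) * (C * \<bar>\<mu> - l\<bar>)"
          by (simp add: abs_mult)
      qed
      then show ?thesis by simp
    qed
    also have "\<dots> = I * (C * \<bar>\<mu> - l\<bar>)" unfolding I_def by (rule integral_mult_left)
    also have "\<dots> = I * C * \<bar>\<mu> - l\<bar>" by simp
    finally show "\<bar>J l \<mu> - J l l\<bar> \<le> I * C * \<bar>\<mu> - l\<bar>" .
  qed
qed

lemma ibp_u:
  "((\<lambda>t. u l t * ((q t - \<mu> * \<rho> t) * u \<mu> t) + ux l t * (\<sigma> t * ux \<mu> t)) has_integral (u l 0 * (\<sigma> 0 * ux \<mu> 0))) {-1..0}"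
proof -
  have "((\<lambda>t. u l t * ((q t - \<mu> * \<rho> t) * u \<mu> t) + ux l t * (\<sigma> t * ux \<mu> t)) has_integral
     (u l 0 * (\<sigma> 0 * ux \<mu> 0) - u l (-1) * (\<sigma> (-1) * ux \<mu> (-1)))) {-1..0}"
  proof (rule ibp[where W="\<lambda>x. \<sigma> x * ux \<mu> x"])
    show "(-1::real) \<le> 0" by simp
    show "\<And>x. x \<in> {-1..0} \<Longrightarrow> (u l has_real_derivative ux l x) (at x within {-1..0})" by (rule sol_deriv[OF usol])
    show "continuous_on {-1..0} (ux l)" by (rule sol_y'c[OF usol])
    show "(\<lambda>t. (q t - \<mu> * \<rho> t) * u \<mu> t) absolutely_integrable_on {-1..0}" by (rule sol_gai[OF usol])
    show "\<And>x. x \<in> {-1..0} \<Longrightarrow> ((\<lambda>t. (q t - \<mu> * \<rho> t) * u \<mu> t) has_integral \<sigma> x * ux \<mu> x - \<sigma> (-1) * ux \<mu> (-1)) {-1..x}"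
      using usol unfolding sl_solution_def by blast
    show "(0::real) \<in> {-1..0}" by simp
  qed
  then show ?thesis using uinit by simp
qed

lemma wronskian: "u l 0 * (\<sigma> 0 * ux \<mu> 0) - u \<mu> 0 * (\<sigma> 0 * ux l 0) = (l - \<mu>) * J l \<mu>"
proof -
  have "((\<lambda>t. (u l t * ((q t - \<mu> * \<rho> t) * u \<mu> t) + ux l t * (\<sigma> t * ux \<mu> t))
        - (u \<mu> t * ((q t - l * \<rho> t) * u l t) + ux \<mu> t * (\<sigma> t * ux l t))) has_integral
       (u l 0 * (\<sigma> 0 * ux \<mu> 0) - u \<mu> 0 * (\<sigma> 0 * ux l 0))) {-1..0}"
    by (rule has_integral_diff[OF ibp_u ibp_u])
  hence h: "((\<lambda>t. (l - \<mu>) * (\<rho> t * u l t * u \<mu> t)) has_integral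
       (u l 0 * (\<sigma> 0 * ux \<mu> 0) - u \<mu> 0 * (\<sigma> 0 * ux l 0))) {-1..0}"
    by (rule has_integral_eq[rotated]) (simp add: algebra_simps)
  have ci: "continuous_on {-1..0} (\<lambda>t. \<rho> t * u l t * u \<mu> t)"
    by (intro continuous_on_mult \<rho>c sol_yc[OF usol])
  have "((\<lambda>t. (l - \<mu>) * (\<rho> t * u l t * u \<mu> t)) has_integral (l - \<mu>) * J l \<mu>) {-1..0}"
    unfolding J_def by (intro has_integral_mult_right integrable_integral integrable_continuous_real ci)
  then show ?thesis by (rule has_integral_unique[OF h])
qed

lemma J_pos: "u l 0 \<noteq> 0 \<Longrightarrow> J l l > 0"
  unfolding J_def
proof (rule integral_pos_cont)
  assume u0: "u l 0 \<noteq> 0"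
  show "(-1::real) < 0" by simp
  show "continuous_on {-1..0} (\<lambda>t. \<rho> t * u l t * u l t)" by (intro continuous_on_mult \<rho>c sol_yc[OF usol])
  show "\<And>x. x \<in> {-1..0} \<Longrightarrow> 0 \<le> \<rho> x * u l x * u l x"
    using \<rho>r rpos by (metis mult.assoc mult_nonneg_nonneg order_trans less_imp_le zero_le_square)
  have "\<rho> 0 > 0" using \<rho>r[of 0] rpos by simp
  moreover have "u l 0 * u l 0 > 0" using u0 by (metis not_real_square_gt_zero)
  ultimately show "0 < \<rho> 0 * u l 0 * u l 0" by (simp add: mult.assoc)
qed

lemma m_deriv:
  assumes u0: "u l 0 \<noteq> 0"
  shows "(m has_real_derivative (- J l l / (u l 0 * u l 0))) (at l)"
  unfolding has_field_derivative_iff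
proof -
  have ut: "((\<lambda>\<mu>. u \<mu> 0) \<longlongrightarrow> u l 0) (at l)" using u0_cont[of l] by (simp add: isCont_def)
  have Jt: "((\<lambda>\<mu>. J l \<mu>) \<longlongrightarrow> J l l) (at l)" using J_cont[of l] by (simp add: isCont_def)
  have lim: "((\<lambda>\<mu>. - J l \<mu> / (u \<mu> 0 * u l 0)) \<longlongrightarrow> - J l l / (u l 0 * u l 0)) (at l)"
    by (intro tendsto_intros Jt ut) (simp add: u0)
  have ev1: "eventually (\<lambda>\<mu>. u \<mu> 0 \<noteq> 0) (at l)" using tendsto_imp_eventually_ne[OF ut u0] .
  have ev2: "eventually (\<lambda>\<mu>. \<mu> \<noteq> l) (at l)" by (simp add: eventually_at_filter)
  have "eventually (\<lambda>\<mu>. - J l \<mu> / (u \<mu> 0 * u l 0) = (m \<mu> - m l) / (\<mu> - l)) (at l)"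
    using ev1 ev2
  proof (eventually_elim)
    case (elim \<mu>)
    have w: "u l 0 * (\<sigma> 0 * ux \<mu> 0) - u \<mu> 0 * (\<sigma> 0 * ux l 0) = (l - \<mu>) * J l \<mu>" by (rule wronskian)
    have "m \<mu> - m l = (u l 0 * (\<sigma> 0 * ux \<mu> 0) - u \<mu> 0 * (\<sigma> 0 * ux l 0)) / (u \<mu> 0 * u l 0)"
      unfolding m_def using elim u0 by (simp add: field_simps)
    also have "\<dots> = (l - \<mu>) * J l \<mu> / (u \<mu> 0 * u l 0)" using w by simp
    finally have "m \<mu> - m l = (l - \<mu>) * J l \<mu> / (u \<mu> 0 * u l 0)" .
    moreover have "u \<mu> 0 * u l 0 \<noteq> 0" "\<mu> - l \<noteq> 0" using elim u0 by auto
    ultimately show ?case by (simp add: field_simps)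
  qed
  then show "((\<lambda>\<mu>. (m \<mu> - m l) / (\<mu> - l)) \<longlongrightarrow> - J l l / (u l 0 * u l 0)) (at l within UNIV)"
    using Lim_transform_eventually[OF lim] by simp
qed

lemma m_decr:
  assumes xy: "x < y" and nz: "\<And>t. x \<le> t \<Longrightarrow> t \<le> y \<Longrightarrow> u t 0 \<noteq> 0"
  shows "m y < m x"
proof (rule DERIV_neg_imp_decreasing[OF xy])
  fix t assume t: "x \<le> t" "t \<le> y"
  have u0: "u t 0 \<noteq> 0" using nz t by auto
  have "u t 0 * u t 0 > 0" using u0 by (metis not_real_square_gt_zero)
  then have "J t t / (u t 0 * u t 0) > 0" using J_pos[OF u0] by simp
  then show "\<exists>d. (m has_real_derivative d) (at t) \<and> d < 0" using m_deriv[OF u0] by force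
qed

end

lemma dec_inf_left:
  fixes f :: "real \<Rightarrow> real"
  assumes dec: "\<And>x y. c < x \<Longrightarrow> x < y \<Longrightarrow> y < b \<Longrightarrow> f y < f x" and cb: "c < b"
    and inf: "filterlim f at_infinity (at_left b)"
  shows "filterlim f at_bot (at_left b)"
  unfolding filterlim_at_bot
proof
  fix Z :: real
  define h where "h = (c + b) / 2"
  have h: "c < h" "h < b" using cb by (auto simp: h_def)
  define M where "M = \<bar>Z\<bar> + \<bar>f h\<bar> + 1"
  have e1: "eventually (\<lambda>x. M \<le> norm (f x)) (at_left b)"
    using inf unfolding filterlim_at_infinity[OF order_refl] by (auto simp: M_def)
  have e2: "eventually (\<lambda>x. x \<in> {h<..<b}) (at_left b)" using eventually_at_left_real[OF h(2)] .
  show "eventually (\<lambda>x. f x \<le> Z) (at_left b)"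
    using e1 e2
  proof eventually_elim
    case (elim x)
    have "f x < f h" using dec[of h x] elim h by auto
    then show ?case using elim(1) by (auto simp: M_def)
  qed
qed

lemma dec_inf_right:
  fixes f :: "real \<Rightarrow> real"
  assumes dec: "\<And>x y. b < x \<Longrightarrow> x < y \<Longrightarrow> y < c \<Longrightarrow> f y < f x" and cb: "b < c"
    and inf: "filterlim f at_infinity (at_right b)"
  shows "filterlim f at_top (at_right b)"
  unfolding filterlim_at_top
proof
  fix Z :: real
  define h where "h = (c + b) / 2"
  have h: "b < h" "h < c" using cb by (auto simp: h_def)
  define M where "M = \<bar>Z\<bar> + \<bar>f h\<bar> + 1"
  have e1: "eventually (\<lambda>x. M \<le> norm (f x)) (at_right b)"
    using inf unfolding filterlim_at_infinity[OF order_refl] by (auto simp: M_def)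
  have e2: "eventually (\<lambda>x. x \<in> {b<..<h}) (at_right b)" using eventually_at_right_real[OF h(1)] .
  show "eventually (\<lambda>x. Z \<le> f x) (at_right b)"
    using e1 e2
  proof eventually_elim
    case (elim x)
    have "f h < f x" using dec[of x h] elim h by auto
    then show ?case using elim(1) by (auto simp: M_def)
  qed
qed

lemma amgm_aux:
  fixes t x y :: real
  assumes t: "t > 0"
  shows "2 * x * y \<le> t * (x * x) + (1/t) * (y * y)"
proof -
  have "0 \<le> (1/t) * ((t*x - y) * (t*x - y))" using t by simp
  also have "\<dots> = t * (x * x) + (1/t) * (y * y) - 2 * x * y" using t by (simp add: field_simps)
  finally show ?thesis by simp
qed

context leftSL begin

lemma m_inf_at:
  assumes u0: "u \<mu> 0 = 0" and ev: "eventually (\<lambda>l. u l 0 \<noteq> 0) (at \<mu> within S)"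
  shows "filterlim m at_infinity (at \<mu> within S)"
proof -
  have mf: "m = (\<lambda>l. (\<sigma> 0 * ux l 0) / u l 0)" by (simp add: m_def[abs_def])
  have n: "((\<lambda>l. \<sigma> 0 * ux l 0) \<longlongrightarrow> \<sigma> 0 * ux \<mu> 0) (at \<mu> within S)"
    using isCont_within[OF ux0_cont[of \<mu>]] .
  have nz: "\<sigma> 0 * ux \<mu> 0 \<noteq> 0" using ux_nonzero[OF u0] \<sigma>s[of 0] spos by auto
  have d: "filterlim (\<lambda>l. u l 0) (at 0) (at \<mu> within S)"
  proof -
    have t: "((\<lambda>l. u l 0) \<longlongrightarrow> 0) (at \<mu> within S)" using isCont_within[OF u0_cont[of \<mu>]] u0 by simp
    show ?thesis by (rule filterlim_atI[OF t ev])
  qed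
  show ?thesis unfolding mf by (rule filterlim_divide_at_infinity[OF n d nz])
qed


lemma m_left:
  assumes u0: "u \<mu> 0 = 0" and c: "c < \<mu>" and nz: "\<And>l. l \<in> {c<..<\<mu>} \<Longrightarrow> u l 0 \<noteq> 0"
  shows "filterlim m at_bot (at_left \<mu>)"
proof (rule dec_inf_left[OF _ c])
  fix x y assume "c < x" "x < y" "y < \<mu>"
  then show "m y < m x" by (intro m_decr) (auto intro!: nz)
next
  have ev: "eventually (\<lambda>l. u l 0 \<noteq> 0) (at_left \<mu>)"
    using eventually_at_left_real[OF c] by eventually_elim (rule nz)
  show "filterlim m at_infinity (at_left \<mu>)" by (rule m_inf_at[OF u0 ev])
qed

lemma m_right:
  assumes u0: "u \<mu> 0 = 0" and c: "\<mu> < c" and nz: "\<And>l. l \<in> {\<mu><..<c} \<Longrightarrow> u l 0 \<noteq> 0"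
  shows "filterlim m at_top (at_right \<mu>)"
proof (rule dec_inf_right[OF _ c])
  fix x y assume "\<mu> < x" "x < y" "y < c"
  then show "m y < m x" by (intro m_decr) (auto intro!: nz)
next
  have ev: "eventually (\<lambda>l. u l 0 \<noteq> 0) (at_right \<mu>)"
    using eventually_at_right_real[OF c] by eventually_elim (rule nz)
  show "filterlim m at_infinity (at_right \<mu>)" by (rule m_inf_at[OF u0 ev])
qed

lemma m_lower:
  assumes u0: "u l 0 \<noteq> 0" and t: "t > 0" and tl: "s * (t * t) \<le> - l * r"
  shows "s * t \<le> m l"
proof -
  define U where "U = u l"
  define V where "V = ux l"
  have Uc: "continuous_on {-1..0} U" unfolding U_def by (rule sol_yc[OF usol])
  have Vc: "continuous_on {-1..0} V" unfolding V_def by (rule sol_y'c[OF usol])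
  have UUc: "continuous_on {-1..0} (\<lambda>t. U t * U t)" by (intro continuous_on_mult Uc)
  have h1: "((\<lambda>t. U t * ((q t - l * \<rho> t) * U t) + V t * (\<sigma> t * V t)) has_integral (U 0 * (\<sigma> 0 * V 0))) {-1..0}"
    unfolding U_def V_def by (rule ibp_u)
  define I1 where "I1 = integral {-1..0} (\<lambda>t. q t * (U t * U t))"
  define I2 where "I2 = integral {-1..0} (\<lambda>t. \<rho> t * (U t * U t))"
  define I3 where "I3 = integral {-1..0} (\<lambda>t. \<sigma> t * (V t * V t))"
  define A where "A = integral {-1..0} (\<lambda>t. U t * U t)"
  define B where "B = integral {-1..0} (\<lambda>t. V t * V t)"
  have i1: "(\<lambda>t. q t * (U t * U t)) integrable_on {-1..0}"
    using set_lebesgue_integral_eq_integral(1)[OF abs_int_cont_prod[OF UUc qi]] .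
  have i2: "(\<lambda>t. (- l) * (\<rho> t * (U t * U t))) integrable_on {-1..0}"
    by (intro integrable_continuous_real continuous_on_mult continuous_on_const \<rho>c Uc)
  have i3: "(\<lambda>t. \<sigma> t * (V t * V t)) integrable_on {-1..0}"
    by (intro integrable_continuous_real continuous_on_mult \<sigma>c Vc)
  have "U 0 * (\<sigma> 0 * V 0) = integral {-1..0} (\<lambda>t. U t * ((q t - l * \<rho> t) * U t) + V t * (\<sigma> t * V t))"
    using h1 by (simp add: integral_unique)
  also have "\<dots> = integral {-1..0} (\<lambda>t. (q t * (U t * U t) + (- l) * (\<rho> t * (U t * U t))) + \<sigma> t * (V t * V t))"
    by (rule integral_cong) (simp add: algebra_simps)
  also have "\<dots> = I1 + (- l) * I2 + I3"
    unfolding I1_def I2_def I3_def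
    using integral_add[OF integrable_add[OF i1 i2] i3] integral_add[OF i1 i2] by simp
  finally have E0: "U 0 * (\<sigma> 0 * V 0) = I1 + (- l) * I2 + I3" .
  have I1nn: "0 \<le> I1" unfolding I1_def by (rule qnn[OF UUc]) simp
  have A0: "0 \<le> A" unfolding A_def by (rule integral_nonneg[OF integrable_continuous_real[OF UUc]]) simp
  have I2A: "r * A \<le> I2"
  proof -
    have "integral {-1..0} (\<lambda>t. r * (U t * U t)) \<le> I2" unfolding I2_def
    proof (rule integral_le)
      show "(\<lambda>t. r * (U t * U t)) integrable_on {-1..0}" by (intro integrable_continuous_real continuous_on_mult continuous_on_const Uc)
      show "(\<lambda>t. \<rho> t * (U t * U t)) integrable_on {-1..0}" by (intro integrable_continuous_real continuous_on_mult \<rho>c Uc)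
      fix x :: real assume "x \<in> {-1..0}"
      then show "r * (U x * U x) \<le> \<rho> x * (U x * U x)" using \<rho>r by (intro mult_right_mono) auto
    qed
    then show ?thesis unfolding A_def by simp
  qed
  have I3B: "s * B \<le> I3"
  proof -
    have "integral {-1..0} (\<lambda>t. s * (V t * V t)) \<le> I3" unfolding I3_def
    proof (rule integral_le)
      show "(\<lambda>t. s * (V t * V t)) integrable_on {-1..0}" by (intro integrable_continuous_real continuous_on_mult continuous_on_const Vc)
      show "(\<lambda>t. \<sigma> t * (V t * V t)) integrable_on {-1..0}" using i3 .
      fix x :: real assume "x \<in> {-1..0}"
      then show "s * (V x * V x) \<le> \<sigma> x * (V x * V x)" using \<sigma>s by (intro mult_right_mono) auto
    qed
    then show ?thesis unfolding B_def by simp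
  qed
  have sq: "U 0 * U 0 \<le> t * A + (1/t) * B"
  proof -
    have "((\<lambda>t. U t * V t + V t * U t) has_integral (U 0 * U 0 - U (-1) * U (-1))) {-1..0}"
    proof (rule ibp[where W = U])
      show "(-1::real) \<le> 0" by simp
      show "\<And>x. x \<in> {-1..0} \<Longrightarrow> (U has_real_derivative V x) (at x within {-1..0})"
        unfolding U_def V_def by (rule sol_deriv[OF usol])
      show "continuous_on {-1..0} V" by (rule Vc)
      show "V absolutely_integrable_on {-1..0}" by (rule absolutely_integrable_continuous_real[OF Vc])
      fix x :: real assume x: "x \<in> {-1..0}"
      have "V integrable_on {-1..x}" using int_sub[OF integrable_continuous_real[OF Vc], of "-1" x] x by auto
      then show "(V has_integral U x - U (-1)) {-1..x}"
        using sol_y[OF usol x] unfolding U_def V_def by (simp add: has_integral_integral)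
    next
      show "(0::real) \<in> {-1..0}" by simp
    qed
    hence "U 0 * U 0 = integral {-1..0} (\<lambda>x. 2 * U x * V x)"
      using uinit unfolding U_def by (simp add: integral_unique algebra_simps)
    also have "\<dots> \<le> integral {-1..0} (\<lambda>x. t * (U x * U x) + (1/t) * (V x * V x))"
    proof (rule integral_le)
      show "(\<lambda>x. 2 * U x * V x) integrable_on {-1..0}"
        by (intro integrable_continuous_real continuous_on_mult continuous_on_const Uc Vc)
      show "(\<lambda>x. t * (U x * U x) + (1/t) * (V x * V x)) integrable_on {-1..0}"
        by (intro integrable_continuous_real continuous_on_add continuous_on_mult continuous_on_const Uc Vc)
      fix x :: real show "2 * U x * V x \<le> t * (U x * U x) + (1/t) * (V x * V x)" by (rule amgm_aux[OF t])
    qed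
    also have "\<dots> = integral {-1..0} (\<lambda>x. t * (U x * U x)) + integral {-1..0} (\<lambda>x. (1/t) * (V x * V x))"
      by (intro integral_add integrable_continuous_real continuous_on_mult continuous_on_const Uc Vc)
    also have "\<dots> = t * A + (1/t) * B" unfolding A_def B_def by simp
    finally show ?thesis .
  qed
  have "s * t * (U 0 * U 0) \<le> s * t * (t * A + (1/t) * B)"
    using sq spos t by (intro mult_left_mono) auto
  also have "\<dots> = (s * (t * t)) * A + s * B" using t by (simp add: field_simps)
  also have "\<dots> \<le> (- l * r) * A + s * B" using tl A0 by (intro add_right_mono mult_right_mono) auto
  also have "\<dots> \<le> (- l) * I2 + I3"
  proof -
    have "-l \<ge> 0"
    proof -
      have "s * (t * t) > 0" using spos t by simp
      then have "0 < -l * r" using tl by linarith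
      then show ?thesis using rpos by (simp add: zero_less_mult_iff mult_less_0_iff)
    qed
    then have "(- l) * (r * A) \<le> (- l) * I2" using I2A by (rule mult_left_mono[rotated])
    then have "(- l * r) * A \<le> (- l) * I2" by (simp add: mult.assoc)
    then show ?thesis using I3B by linarith
  qed
  also have "\<dots> \<le> U 0 * (\<sigma> 0 * V 0)" using E0 I1nn by linarith
  finally have main: "s * t * (U 0 * U 0) \<le> U 0 * (\<sigma> 0 * V 0)" .
  have UU: "U 0 * U 0 > 0" using u0 unfolding U_def by (metis not_real_square_gt_zero)
  have "m l = U 0 * (\<sigma> 0 * V 0) / (U 0 * U 0)" unfolding m_def U_def V_def using u0 by (simp add: field_simps)
  moreover have "s * t \<le> U 0 * (\<sigma> 0 * V 0) / (U 0 * U 0)" unfolding pos_le_divide_eq[OF UU] using main .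
  ultimately show ?thesis by simp
qed

lemma m_minf:
  assumes nz: "\<And>l. l < L \<Longrightarrow> u l 0 \<noteq> 0"
  shows "filterlim m at_top at_bot"
  unfolding filterlim_at_top
proof
  fix Z :: real
  define t where "t = \<bar>Z\<bar> / s + 1"
  have "\<bar>Z\<bar> / s \<ge> 0" using spos by simp
  then have t: "t > 0" unfolding t_def by linarith
  define N where "N = min (L - 1) (- (s * (t * t)) / r)"
  show "eventually (\<lambda>l. Z \<le> m l) at_bot"
    unfolding eventually_at_bot_linorder
  proof (intro exI[of _ N] allI impI)
    fix l assume l: "l \<le> N"
    have u0: "u l 0 \<noteq> 0" using nz l by (auto simp: N_def)
    have "l \<le> - (s * (t * t)) / r" using l by (simp add: N_def)
    hence tl: "s * (t * t) \<le> - l * r" using rpos by (simp add: field_simps)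
    have "Z \<le> s * t"
    proof -
      have "\<bar>Z\<bar> \<le> s * t" using spos by (simp add: t_def field_simps)
      then show ?thesis by linarith
    qed
    also have "\<dots> \<le> m l" by (rule m_lower[OF u0 t tl])
    finally show "Z \<le> m l" .
  qed
qed
end

lemma qnn_gen:
  fixes q h :: "real \<Rightarrow> real"
  assumes ae: "AE x in lborel. x \<in> {a..b} \<longrightarrow> 0 \<le> q x" and qi: "q absolutely_integrable_on {a..b}"
   and hc: "continuous_on {a..b} h" and hn: "\<And>x. x\<in>{a..b} \<Longrightarrow> 0 \<le> h x"
  shows "0 \<le> integral {a..b} (\<lambda>t. q t * h t)"
proof -
  have ai: "(\<lambda>t. q t * h t) absolutely_integrable_on {a..b}" by (rule abs_int_cont_prod[OF hc qi])
  have "0 \<le> set_lebesgue_integral lebesgue {a..b} (\<lambda>t. q t * h t)" unfolding set_lebesgue_integral_def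
  proof (rule integral_nonneg_AE)
    show "AE x in lebesgue. 0 \<le> indicator {a..b} x *\<^sub>R (q x * h x)"
      using AE_completion[OF ae] by eventually_elim (use hn in \<open>auto simp: indicator_def\<close>)
  qed
  then show ?thesis using set_lebesgue_integral_eq_integral(2)[OF ai] by simp
qed

lemma sum_at_top:
  fixes f g :: "'a \<Rightarrow> real"
  assumes "filterlim f at_top F \<or> (\<exists>c. (f \<longlongrightarrow> c) F)" "filterlim g at_top F \<or> (\<exists>c. (g \<longlongrightarrow> c) F)"
    "filterlim f at_top F \<or> filterlim g at_top F"
  shows "filterlim (\<lambda>x. f x + g x) at_top F"
  using assms
  by (auto intro: filterlim_at_top_add_at_top filterlim_tendsto_add_at_top
      simp: filterlim_tendsto_add_at_top[of g _ F f, simplified add.commute])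

lemma sum_at_bot:
  fixes f g :: "'a \<Rightarrow> real"
  assumes "filterlim f at_bot F \<or> (\<exists>c. (f \<longlongrightarrow> c) F)" "filterlim g at_bot F \<or> (\<exists>c. (g \<longlongrightarrow> c) F)"
    "filterlim f at_bot F \<or> filterlim g at_bot F"
  shows "filterlim (\<lambda>x. f x + g x) at_bot F"
proof -
  have "filterlim (\<lambda>x. - f x + - g x) at_top F"
  proof (rule sum_at_top)
    show "filterlim (\<lambda>x. - f x) at_top F \<or> (\<exists>c. ((\<lambda>x. - f x) \<longlongrightarrow> c) F)"
      using assms(1) by (auto simp: filterlim_uminus_at_top intro: tendsto_minus)
    show "filterlim (\<lambda>x. - g x) at_top F \<or> (\<exists>c. ((\<lambda>x. - g x) \<longlongrightarrow> c) F)"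
      using assms(2) by (auto simp: filterlim_uminus_at_top intro: tendsto_minus)
    show "filterlim (\<lambda>x. - f x) at_top F \<or> filterlim (\<lambda>x. - g x) at_top F"
      using assms(3) by (auto simp: filterlim_uminus_at_top)
  qed
  then show ?thesis by (simp add: filterlim_uminus_at_top add.commute)
qed

context leftSL begin

lemma m_cont: "u p 0 \<noteq> 0 \<Longrightarrow> (m \<longlongrightarrow> m p) (at p within S)"
  using isCont_within[OF DERIV_isCont[OF m_deriv]] by blast

lemma m_left_cases:
  assumes c: "c < p" and nz: "\<And>l. l \<in> {c<..<p} \<Longrightarrow> u l 0 \<noteq> 0"
  shows "filterlim m at_bot (at_left p) \<or> (\<exists>d. (m \<longlongrightarrow> d) (at_left p))"
  using m_left[OF _ c nz] m_cont[of p] by blast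

lemma m_right_cases:
  assumes c: "p < c" and nz: "\<And>l. l \<in> {p<..<c} \<Longrightarrow> u l 0 \<noteq> 0"
  shows "filterlim m at_top (at_right p) \<or> (\<exists>d. (m \<longlongrightarrow> d) (at_right p))"
  using m_right[OF _ c nz] m_cont[of p] by blast

end

theorem lemma3p2:
  fixes \<rho>1 \<sigma>1 q1 \<rho>2 \<sigma>2 q2 :: "real \<Rightarrow> real"
    and u ux v vx :: "real \<Rightarrow> real \<Rightarrow> real"
    and \<mu> :: "nat \<Rightarrow> real"
    and F :: "real \<Rightarrow> real"
  assumes H2: "H2_on (-1) 0 \<rho>1" "H2_on (-1) 0 \<sigma>1" "H2_on 0 1 \<rho>2" "H2_on 0 1 \<sigma>2"
    and pos: "uniformly_positive_on {-1..0} \<rho>1" "uniformly_positive_on {-1..0} \<sigma>1"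
             "uniformly_positive_on {0..1} \<rho>2" "uniformly_positive_on {0..1} \<sigma>2"
    and L1: "q1 absolutely_integrable_on {-1..0}" "q2 absolutely_integrable_on {0..1}"
    and nonneg: "AE x in lborel. x \<in> {-1..0} \<longrightarrow> 0 \<le> q1 x"
                "AE x in lborel. x \<in> {0..1} \<longrightarrow> 0 \<le> q2 x"
    and u_sol: "\<And>lam. sl_solution \<sigma>1 q1 \<rho>1 (-1) 0 lam (u lam) (ux lam)"
    and u_init: "\<And>lam. u lam (-1) = 0" "\<And>lam. ux lam (-1) = 1"
    and v_sol: "\<And>lam. sl_solution \<sigma>2 q2 \<rho>2 0 1 lam (v lam) (vx lam)"
    and v_init: "\<And>lam. v lam 1 = 0" "\<And>lam. vx lam 1 = -1"
    and \<mu>_mono: "\<And>n. n \<ge> 1 \<Longrightarrow> \<mu> n \<le> \<mu> (Suc n)"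
    and \<mu>_fin: "\<And>t. finite {n. n \<ge> 1 \<and> \<mu> n = t}"
    and \<mu>_count: "\<And>t. card {n. n \<ge> 1 \<and> \<mu> n = t} =
        (if dirichlet_eigenvalue \<sigma>1 q1 \<rho>1 (-1) 0 t then 1 else 0) +
        (if dirichlet_eigenvalue \<sigma>2 q2 \<rho>2 0 1 t then 1 else 0)"
    and F_def: "F \<equiv> (\<lambda>lam. (\<sigma>1 0 * v lam 0 * ux lam 0 - \<sigma>2 0 * u lam 0 * vx lam 0) / (u lam 0 * v lam 0))"
  shows "(\<forall>x\<in>{..<\<mu> 1}. \<forall>y\<in>{..<\<mu> 1}. x < y \<longrightarrow> F y < F x) \<and>
         filterlim F at_top at_bot \<and> filterlim F at_bot (at_left (\<mu> 1)) \<and>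
         (\<forall>n\<ge>1. \<mu> n \<noteq> \<mu> (Suc n) \<longrightarrow>
            (\<forall>x\<in>{\<mu> n<..<\<mu> (Suc n)}. \<forall>y\<in>{\<mu> n<..<\<mu> (Suc n)}. x < y \<longrightarrow> F y < F x) \<and>
            filterlim F at_top (at_right (\<mu> n)) \<and> filterlim F at_bot (at_left (\<mu> (Suc n))))"
proof -
  have cont: "continuous_on {a..b} f" if "H2_on a b f" for a b f
    using that unfolding H2_on_def using deriv_cont_on by blast
  obtain r1 where r1: "r1 > 0" "\<And>x. x\<in>{-1..0} \<Longrightarrow> r1 \<le> \<rho>1 x" using pos(1) unfolding uniformly_positive_on_def by blast
  obtain s1 where s1: "s1 > 0" "\<And>x. x\<in>{-1..0} \<Longrightarrow> s1 \<le> \<sigma>1 x" using pos(2) unfolding uniformly_positive_on_def by blast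
  obtain r2 where r2: "r2 > 0" "\<And>x. x\<in>{0..1} \<Longrightarrow> r2 \<le> \<rho>2 x" using pos(3) unfolding uniformly_positive_on_def by blast
  obtain s2 where s2: "s2 > 0" "\<And>x. x\<in>{0..1} \<Longrightarrow> s2 \<le> \<sigma>2 x" using pos(4) unfolding uniformly_positive_on_def by blast
  have Lloc: "leftSL \<sigma>1 q1 \<rho>1 s1 u ux r1"
  proof (intro leftSL.intro sl_coef.intro leftSL_axioms.intro)
    show "continuous_on {-1..0} \<sigma>1" by (rule cont[OF H2(2)])
    show "continuous_on {-1..0} \<rho>1" by (rule cont[OF H2(1)])
    show "\<And>h. continuous_on {-1..0} h \<Longrightarrow> (\<And>x. x \<in> {-1..0} \<Longrightarrow> 0 \<le> h x) \<Longrightarrow> 0 \<le> integral {-1..0} (\<lambda>t. q1 t * h t)"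
      by (rule qnn_gen[OF nonneg(1) L1(1)])
  qed (use s1 r1 L1 u_sol u_init in auto)
  have m1: "continuous_on {0..1} (uminus :: real \<Rightarrow> real)" by (intro continuous_intros)
  have im: "uminus ` {-1..0::real} \<subseteq> {0..1}" by auto
  have Rloc: "leftSL (\<lambda>x. \<sigma>2 (-x)) (\<lambda>x. q2 (-x)) (\<lambda>x. \<rho>2 (-x)) s2 (\<lambda>l x. v l (-x)) (\<lambda>l x. - vx l (-x)) r2"
  proof (intro leftSL.intro sl_coef.intro leftSL_axioms.intro)
    have m: "continuous_on {-1..0} (uminus :: real \<Rightarrow> real)" by (intro continuous_intros)
    show "continuous_on {-1..0} (\<lambda>x. \<sigma>2 (-x))"
      using continuous_on_compose[OF m continuous_on_subset[OF cont[OF H2(4)] im]] by (simp add: o_def)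
    show "continuous_on {-1..0} (\<lambda>x. \<rho>2 (-x))"
      using continuous_on_compose[OF m continuous_on_subset[OF cont[OF H2(3)] im]] by (simp add: o_def)
    have "(\<lambda>x. q2 (-x)) absolutely_integrable_on {- 1..- (0::real)}" using L1(2) by (simp only: absolutely_integrable_reflect_real)
    then show "(\<lambda>x. q2 (-x)) absolutely_integrable_on {-1..0}" by simp
    show "\<And>x. x \<in> {-1..0} \<Longrightarrow> s2 \<le> \<sigma>2 (-x)" using s2 by auto
    show "\<And>x. x \<in> {-1..0} \<Longrightarrow> r2 \<le> \<rho>2 (-x)" using r2 by auto
    show "0 \<le> integral {-1..0} (\<lambda>t. q2 (-t) * h t)" if hc: "continuous_on {-1..0} h" and hn: "\<And>x. x \<in> {-1..0} \<Longrightarrow> 0 \<le> h x" for h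
    proof -
      have "integral {-1..0} (\<lambda>t. q2 (-t) * h t) = integral {0..1} (\<lambda>t. q2 t * h (-t))"
        using Henstock_Kurzweil_Integration.integral_reflect_real[where f="\<lambda>t. q2 t * h (-t)" and a=0 and b=1] by simp
      also have "\<dots> \<ge> 0"
      proof (rule qnn_gen[OF nonneg(2) L1(2)])
        show "continuous_on {0..1} (\<lambda>t. h (-t))"
          using continuous_on_compose[OF m1, of h] hc by (simp add: o_def)
        show "\<And>x. x \<in> {0..1} \<Longrightarrow> 0 \<le> h (-x)" using hn by auto
      qed
      finally show ?thesis .
    qed
    show "\<And>l. sl_solution (\<lambda>x. \<sigma>2 (-x)) (\<lambda>x. q2 (-x)) (\<lambda>x. \<rho>2 (-x)) (-1) 0 l (\<lambda>x. v l (-x)) (\<lambda>x. - vx l (-x))"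
    proof -
      fix l
      have "sl_solution (\<lambda>x. \<sigma>2 (-x)) (\<lambda>x. q2 (-x)) (\<lambda>x. \<rho>2 (-x)) (-1) (-0) l (\<lambda>x. v l (-x)) (\<lambda>x. - vx l (-x))"
        by (rule sl_reflect[OF v_sol]) simp
      then show "sl_solution (\<lambda>x. \<sigma>2 (-x)) (\<lambda>x. q2 (-x)) (\<lambda>x. \<rho>2 (-x)) (-1) 0 l (\<lambda>x. v l (-x)) (\<lambda>x. - vx l (-x))" by simp
    qed
  qed (use s2 r2 v_init in auto)
  interpret L: leftSL \<sigma>1 q1 \<rho>1 s1 u ux r1 by (rule Lloc)
  interpret R: leftSL "\<lambda>x. \<sigma>2 (-x)" "\<lambda>x. q2 (-x)" "\<lambda>x. \<rho>2 (-x)" s2 "\<lambda>l x. v l (-x)" "\<lambda>l x. - vx l (-x)" r2 by (rule Rloc)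
  have e1: "dirichlet_eigenvalue \<sigma>1 q1 \<rho>1 (-1) 0 t \<longleftrightarrow> u t 0 = 0" for t using L.eig_iff by simp
  have e2: "dirichlet_eigenvalue \<sigma>2 q2 \<rho>2 0 1 t \<longleftrightarrow> v t 0 = 0" for t
  proof
    assume "dirichlet_eigenvalue \<sigma>2 q2 \<rho>2 0 1 t"
    then obtain y y' x0 where S: "sl_solution \<sigma>2 q2 \<rho>2 0 1 t y y'" and y: "y 0 = 0" "y 1 = 0"
      and x0: "x0 \<in> {0..1}" "y x0 \<noteq> 0"
      unfolding dirichlet_eigenvalue_def by blast
    have "sl_solution (\<lambda>x. \<sigma>2 (-x)) (\<lambda>x. q2 (-x)) (\<lambda>x. \<rho>2 (-x)) (-1) (-0) t (\<lambda>x. y (-x)) (\<lambda>x. - y' (-x))"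
      by (rule sl_reflect[OF S]) simp
    then have "dirichlet_eigenvalue (\<lambda>x. \<sigma>2 (-x)) (\<lambda>x. q2 (-x)) (\<lambda>x. \<rho>2 (-x)) (-1) 0 t"
      unfolding dirichlet_eigenvalue_def using y x0
      by (intro exI[of _ "\<lambda>x. y (-x)"] exI[of _ "\<lambda>x. - y' (-x)"]) (auto intro!: bexI[of _ "-x0"])
    then show "v t 0 = 0" using R.eig_iff[of t] by simp
  next
    assume v0: "v t 0 = 0"
    obtain x where x: "x \<in> {-1..0}" "v t (-x) \<noteq> 0" using R.u_nonzero[of t] by auto
    show "dirichlet_eigenvalue \<sigma>2 q2 \<rho>2 0 1 t"
      unfolding dirichlet_eigenvalue_def using v_sol v0 v_init x
      by (intro exI[of _ "v t"] exI[of _ "vx t"]) (auto intro!: bexI[of _ "-x"])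
  qed
  define Z where "Z t \<longleftrightarrow> u t 0 = 0 \<or> v t 0 = 0" for t
  have cnt: "card {n. n \<ge> 1 \<and> \<mu> n = t} = (if u t 0 = 0 then 1 else 0) + (if v t 0 = 0 then 1 else 0)" for t
    using \<mu>_count[of t] e1 e2 by simp
  have Zmu: "Z (\<mu> n)" if n: "n \<ge> 1" for n
  proof -
    have "n \<in> {k. k \<ge> 1 \<and> \<mu> k = \<mu> n}" using n by simp
    hence "{k. k \<ge> 1 \<and> \<mu> k = \<mu> n} \<noteq> {}" by blast
    hence "card {k. k \<ge> 1 \<and> \<mu> k = \<mu> n} \<noteq> 0" using \<mu>_fin[of "\<mu> n"] by simp
    hence "(if u (\<mu> n) 0 = 0 then 1 else 0) + (if v (\<mu> n) 0 = 0 then 1 else 0) \<noteq> (0::nat)" using cnt[of "\<mu> n"] by simp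
    then show ?thesis unfolding Z_def by (cases "u (\<mu> n) 0 = 0"; cases "v (\<mu> n) 0 = 0") simp_all
  qed
  have muZ: "\<exists>n\<ge>1. \<mu> n = t" if "Z t" for t
  proof -
    have "(if u t 0 = 0 then 1 else 0) + (if v t 0 = 0 then 1 else 0) \<noteq> (0::nat)"
      using that unfolding Z_def by (cases "u t 0 = 0"; cases "v t 0 = 0") simp_all
    hence "card {k. k \<ge> 1 \<and> \<mu> k = t} \<noteq> 0" using cnt[of t] by simp
    hence "{k. k \<ge> 1 \<and> \<mu> k = t} \<noteq> {}" by (metis card.empty)
    then show ?thesis by blast
  qed
  have mono: "\<mu> i \<le> \<mu> j" if "1 \<le> i" "i \<le> j" for i j
    using that(2,1)
  proof (induction j rule: dec_induct)
    case base then show ?case by simp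
  next
    case (step n) then show ?case using \<mu>_mono[of n] by simp
  qed
  have gap0: "\<not> Z t" if "t < \<mu> 1" for t
  proof
    assume "Z t"
    then obtain k where k: "k \<ge> 1" "\<mu> k = t" using muZ by blast
    then show False using mono[of 1 k] that by simp
  qed
  have gapn: "\<not> Z t" if n: "n \<ge> 1" and t: "\<mu> n < t" "t < \<mu> (Suc n)" for n t
  proof
    assume "Z t"
    then obtain k where k: "k \<ge> 1" "\<mu> k = t" using muZ by blast
    show False
    proof (cases "k \<le> n")
      case True then show False using mono[of k n] k t by simp
    next
      case False then show False using mono[of "Suc n" k] k t n by simp
    qed
  qed
  have Fsum: "F t = L.m t + R.m t" if "\<not> Z t" for t
    using that unfolding Z_def F_def L.m_def R.m_def by (simp add: field_simps)
  have decF: "F y < F x" if xy: "x < y" and nz: "\<And>t. x \<le> t \<Longrightarrow> t \<le> y \<Longrightarrow> \<not> Z t" for x y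
  proof -
    have nz': "u t 0 \<noteq> 0 \<and> v t 0 \<noteq> 0" if "x \<le> t" "t \<le> y" for t using nz[OF that] by (simp add: Z_def)
    have "L.m y < L.m x" by (rule L.m_decr[OF xy]) (use nz' in auto)
    moreover have "R.m y < R.m x" by (rule R.m_decr[OF xy]) (use nz' in auto)
    moreover have "F y = L.m y + R.m y" by (rule Fsum[OF nz[OF less_imp_le[OF xy] order_refl]])
    moreover have "F x = L.m x + R.m x" by (rule Fsum[OF nz[OF order_refl less_imp_le[OF xy]]])
    ultimately show ?thesis by simp
  qed
  have g0: "u t 0 \<noteq> 0 \<and> v t 0 \<noteq> 0" if "t < \<mu> 1" for t using gap0[OF that] by (simp add: Z_def)
  have partA: "\<forall>x\<in>{..<\<mu> 1}. \<forall>y\<in>{..<\<mu> 1}. x < y \<longrightarrow> F y < F x"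
  proof (intro ballI impI)
    fix x y assume x: "x \<in> {..<\<mu> 1}" and y: "y \<in> {..<\<mu> 1}" and xy: "x < y"
    show "F y < F x"
    proof (rule decF[OF xy])
      fix t assume "x \<le> t" "t \<le> y"
      then show "\<not> Z t" using y by (intro gap0) simp
    qed
  qed
  have partB: "filterlim F at_top at_bot"
  proof -
    have sum: "filterlim (\<lambda>l. L.m l + R.m l) at_top at_bot"
    proof (rule filterlim_at_top_add_at_top)
      show "filterlim L.m at_top at_bot" by (rule L.m_minf[of "\<mu> 1"]) (use g0 in auto)
      show "filterlim R.m at_top at_bot" by (rule R.m_minf[of "\<mu> 1"]) (use g0 in auto)
    qed
    have ev: "eventually (\<lambda>l. L.m l + R.m l = F l) at_bot"
      unfolding eventually_at_bot_linorder
    proof (intro exI[of _ "\<mu> 1 - 1"] allI impI)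
      fix l :: real assume "l \<le> \<mu> 1 - 1"
      then have "\<not> Z l" by (intro gap0) simp
      then show "L.m l + R.m l = F l" by (simp add: Fsum)
    qed
    show ?thesis using iffD1[OF filterlim_cong[OF refl refl ev] sum] .
  qed
  have left: "filterlim F at_bot (at_left p)" if cp: "c < p" and Zp: "Z p" and nz: "\<And>t. t \<in> {c<..<p} \<Longrightarrow> \<not> Z t" for c p
  proof -
    have nz': "u t 0 \<noteq> 0 \<and> v t 0 \<noteq> 0" if "t \<in> {c<..<p}" for t using nz[OF that] by (simp add: Z_def)
    have sum: "filterlim (\<lambda>l. L.m l + R.m l) at_bot (at_left p)"
    proof (rule sum_at_bot)
      show "filterlim L.m at_bot (at_left p) \<or> (\<exists>d. (L.m \<longlongrightarrow> d) (at_left p))"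
        by (rule L.m_left_cases[OF cp]) (use nz' in auto)
      show "filterlim R.m at_bot (at_left p) \<or> (\<exists>d. (R.m \<longlongrightarrow> d) (at_left p))"
        by (rule R.m_left_cases[OF cp]) (use nz' in auto)
      show "filterlim L.m at_bot (at_left p) \<or> filterlim R.m at_bot (at_left p)"
      proof (cases "u p 0 = 0")
        case True
        then have "filterlim L.m at_bot (at_left p)" by (rule L.m_left[OF _ cp]) (use nz' in auto)
        then show ?thesis ..
      next
        case False
        then have "v p 0 = 0" using Zp by (simp add: Z_def)
        then have "filterlim R.m at_bot (at_left p)" by (intro R.m_left[OF _ cp]) (use nz' in auto)
        then show ?thesis ..
      qed
    qed
    have ev: "eventually (\<lambda>l. L.m l + R.m l = F l) (at_left p)"
      using eventually_at_left_real[OF cp] by eventually_elim (rule Fsum[OF nz, symmetric])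
    show ?thesis using iffD1[OF filterlim_cong[OF refl refl ev] sum] .
  qed
  have right: "filterlim F at_top (at_right p)" if cp: "p < c" and Zp: "Z p" and nz: "\<And>t. t \<in> {p<..<c} \<Longrightarrow> \<not> Z t" for c p
  proof -
    have nz': "u t 0 \<noteq> 0 \<and> v t 0 \<noteq> 0" if "t \<in> {p<..<c}" for t using nz[OF that] by (simp add: Z_def)
    have sum: "filterlim (\<lambda>l. L.m l + R.m l) at_top (at_right p)"
    proof (rule sum_at_top)
      show "filterlim L.m at_top (at_right p) \<or> (\<exists>d. (L.m \<longlongrightarrow> d) (at_right p))"
        by (rule L.m_right_cases[OF cp]) (use nz' in auto)
      show "filterlim R.m at_top (at_right p) \<or> (\<exists>d. (R.m \<longlongrightarrow> d) (at_right p))"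
        by (rule R.m_right_cases[OF cp]) (use nz' in auto)
      show "filterlim L.m at_top (at_right p) \<or> filterlim R.m at_top (at_right p)"
      proof (cases "u p 0 = 0")
        case True
        then have "filterlim L.m at_top (at_right p)" by (rule L.m_right[OF _ cp]) (use nz' in auto)
        then show ?thesis ..
      next
        case False
        then have "v p 0 = 0" using Zp by (simp add: Z_def)
        then have "filterlim R.m at_top (at_right p)" by (intro R.m_right[OF _ cp]) (use nz' in auto)
        then show ?thesis ..
      qed
    qed
    have ev: "eventually (\<lambda>l. L.m l + R.m l = F l) (at_right p)"
      using eventually_at_right_real[OF cp] by eventually_elim (rule Fsum[OF nz, symmetric])
    show ?thesis using iffD1[OF filterlim_cong[OF refl refl ev] sum] .
  qed
  have partC: "filterlim F at_bot (at_left (\<mu> 1))"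
  proof (rule left[of "\<mu> 1 - 1"])
    show "\<mu> 1 - 1 < \<mu> 1" by simp
    show "Z (\<mu> 1)" by (rule Zmu) simp
    fix t assume "t \<in> {\<mu> 1 - 1<..<\<mu> 1}" then show "\<not> Z t" by (intro gap0) simp
  qed
  have partD: "(\<forall>x\<in>{\<mu> n<..<\<mu> (Suc n)}. \<forall>y\<in>{\<mu> n<..<\<mu> (Suc n)}. x < y \<longrightarrow> F y < F x) \<and>
            filterlim F at_top (at_right (\<mu> n)) \<and> filterlim F at_bot (at_left (\<mu> (Suc n)))"
    if n: "n \<ge> 1" and ne: "\<mu> n \<noteq> \<mu> (Suc n)" for n
  proof -
    have lt: "\<mu> n < \<mu> (Suc n)" using \<mu>_mono[OF n] ne by simp
    have nz: "\<And>t. t \<in> {\<mu> n<..<\<mu> (Suc n)} \<Longrightarrow> \<not> Z t" using gapn[OF n] by auto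
    show ?thesis
    proof (intro conjI ballI impI)
      fix x y assume "x \<in> {\<mu> n<..<\<mu> (Suc n)}" "y \<in> {\<mu> n<..<\<mu> (Suc n)}" "x < y"
      then show "F y < F x" by (intro decF) (auto intro!: nz)
    next
      show "filterlim F at_top (at_right (\<mu> n))" by (rule right[OF lt Zmu[OF n] nz])
    next
      show "filterlim F at_bot (at_left (\<mu> (Suc n)))" by (rule left[OF lt Zmu nz]) simp
    qed
  qed
  show ?thesis using partA partB partC partD by blast
qed


end
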